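(* In the QiSVD setup, assume (E1) and (E2) hold. Then $$\|A-\hat U\hat U^TA\|_F^2<\|A-A_k\|_F^2+5\omega\|A\|_F^2 .$$
   Context: QiSVD setup. Let $A\in\mathbb{R}^{m\times n}$ be a nonzero matrix of rank $r$. For a nonzero matrix $B$, $\sigma_{\min}(B)$ denotes its smallest nonzero singular value, and $\kappa=\|A\|/\sigma_{\min}(A)$, where $\|\cdot\|$ is the spectral norm and $\|\cdot\|_F$ the Frobenius norm. Let $k$ be an integer with $1\le k\le r$, and let $\epsilon,\delta\in(0,1)$. Put $$\omega=\frac{\|A\|^2\epsilon^2}{196(\|A\|_F\kappa+\|A\|)^2},$$ fix $\theta\in\Big(0,\frac{\omega\|A\|^2}{(4k+3+2\omega)\kappa^2\|A\|_F^2}\Big]$, and let $p=\lceil 1/(\theta^2\delta)\rceil$. Sample column indices $j_1,\dots,j_p$ i.i.d. from $[n]$ with $\Pr(j)=P_j=\|A_{:,j}\|^2/\|A\|_F^2$. Let $S\in\mathbb{R}^{m\times p}$ have columns $S_{:,t}=A_{:,j_t}/\sqrt{pP_{j_t}}$. Then sample row indices $i_1,\dots,i_p$ i.i.d. from $[m]$ with $\Pr(i)=P'_i=\|S_{i,:}\|^2/\|S\|_F^2$. Let $W\in\mathbb{R}^{p\times p}$ have rows $W_{t,:}=S_{i_t,:}/\sqrt{pP'_{i_t}}$. Let $\sigma_1\ge\dots\ge\sigma_k$ be the $k$ largest singular values of $W$, and let $v_1,\dots,v_k$ be corresponding orthonormal right singular vectors. Set $V=(v_1,\dots,v_k)\in\mathbb{R}^{p\times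 k}$, $\Sigma=\mathrm{diag}(\sigma_1,\dots,\sigma_k)$, and, when $\sigma_k>0$, $$\hat U=SV\Sigma^{-1}\in\mathbb{R}^{m\times k}.$$ The events used are - (E1): $\|AA^T-SS^T\|_F\le\theta\|A\|_F^2$; - (E2): $\|S^TS-W^TW\|_F\le\theta\|S\|_F^2$. By the column/row sampling lemmas and the choice of $p$, each of these events holds with probability at least $1-\delta$. Let $A=U_A\Sigma_AV_A^T$ be a singular value decomposition of $A$ with $U_A\in\mathbb{R}^{m\times r}$, $V_A\in\mathbb{R}^{n\times r}$ orthonormal and $\Sigma_A=\mathrm{diag}(\sigma_1(A),\dots,\sigma_r(A))$ with $\sigma_1(A)\ge\dots\ge\sigma_r(A)>0$. Then $$A_k=\sum_{i=1}^k\sigma_i(A)\,(U_A)_{:,i}\,(V_A)_{:,i}^T .$$ *)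

theory Defs
  imports Complex_Main "Jordan_Normal_Form.Char_Poly"
begin

definition vnorm :: "real vec \<Rightarrow> real" where
  "vnorm x = sqrt (\<Sum>i<dim_vec x. (x $ i)^2)"

definition fro_norm :: "real mat \<Rightarrow> real" where
  "fro_norm B = sqrt (\<Sum>i<dim_row B. \<Sum>j<dim_col B. (B $$ (i,j))^2)"

definition spec_norm :: "real mat \<Rightarrow> real" where
  "spec_norm B = Sup {vnorm (B *\<^sub>v x) | x. x \<in> carrier_vec (dim_col B) \<and> vnorm x = 1}"

definition sigma_min :: "real mat \<Rightarrow> real" where
  "sigma_min B = sqrt (Min {e. e \<noteq> 0 \<and> eigenvalue (transpose_mat B * B) e})"

definition cond_num :: "real mat \<Rightarrow> real" where
  "cond_num B = spec_norm B / sigma_min B"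

definition col_prob :: "real mat \<Rightarrow> nat \<Rightarrow> real" where
  "col_prob B j = (\<Sum>a<dim_row B. (B $$ (a,j))^2) / (fro_norm B)^2"

definition row_prob :: "real mat \<Rightarrow> nat \<Rightarrow> real" where
  "row_prob B i = (\<Sum>c<dim_col B. (B $$ (i,c))^2) / (fro_norm B)^2"

definition samp_cols :: "real mat \<Rightarrow> nat \<Rightarrow> (nat \<Rightarrow> nat) \<Rightarrow> real mat" where
  "samp_cols A p j = mat (dim_row A) p (\<lambda>(a,t). A $$ (a, j t) / sqrt (real p * col_prob A (j t)))"

definition samp_rows :: "real mat \<Rightarrow> nat \<Rightarrow> (nat \<Rightarrow> nat) \<Rightarrow> real mat" where
  "samp_rows S p i = mat p (dim_col S) (\<lambda>(t,c). S $$ (i t, c) / sqrt (real p * row_prob S (i t)))"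

end

theory Submission
  imports Defs
begin


lemma cs_sum:
  fixes f g :: "nat \<Rightarrow> real"
  shows "(\<Sum>i\<in>I. f i * g i)^2 \<le> (\<Sum>i\<in>I. (f i)^2) * (\<Sum>i\<in>I. (g i)^2)"
proof -
  have e: "\<And>i j. (f i * g j - f j * g i)^2 = (f i)^2 * (g j)^2 + (f j)^2 * (g i)^2 - 2 * ((f i * g i) * (f j * g j))"
    by (simp add: power2_eq_square algebra_simps)
  have "0 \<le> (\<Sum>i\<in>I. \<Sum>j\<in>I. (f i * g j - f j * g i)^2)" by (intro sum_nonneg) auto
  also have "\<dots> = (\<Sum>i\<in>I. \<Sum>j\<in>I. (f i)^2 * (g j)^2) + (\<Sum>i\<in>I. \<Sum>j\<in>I. (f j)^2 * (g i)^2)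
      - 2 * (\<Sum>i\<in>I. \<Sum>j\<in>I. (f i * g i) * (f j * g j))"
    unfolding e by (simp add: sum_subtractf sum.distrib sum_distrib_left)
  also have "(\<Sum>i\<in>I. \<Sum>j\<in>I. (f i)^2 * (g j)^2) = (\<Sum>i\<in>I. (f i)^2) * (\<Sum>i\<in>I. (g i)^2)"
    by (simp add: sum_product)
  also have "(\<Sum>i\<in>I. \<Sum>j\<in>I. (f j)^2 * (g i)^2) = (\<Sum>i\<in>I. (f i)^2) * (\<Sum>i\<in>I. (g i)^2)"
    by (subst sum.swap) (simp add: sum_product)
  also have "(\<Sum>i\<in>I. \<Sum>j\<in>I. (f i * g i) * (f j * g j)) = (\<Sum>i\<in>I. f i * g i)^2"
    by (simp add: sum_product power2_eq_square)
  finally show ?thesis by simp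
qed

lemma sp_self_ge0: "(x::real vec) \<bullet> x \<ge> 0"
  unfolding scalar_prod_def by (intro sum_nonneg) auto

lemma sp_self_sum: "(x::real vec) \<bullet> x = (\<Sum>i<dim_vec x. (x$i)^2)"
  unfolding scalar_prod_def by (simp add: power2_eq_square atLeast0LessThan)

lemma cs_vec:
  fixes x y :: "real vec"
  assumes "x \<in> carrier_vec d" "y \<in> carrier_vec d"
  shows "(x \<bullet> y)^2 \<le> (x \<bullet> x) * (y \<bullet> y)"
  using assms cs_sum[of "\<lambda>i. x$i" "\<lambda>i. y$i" "{0..<d}"]
  unfolding scalar_prod_def by (simp add: power2_eq_square)

lemma amgm_vec:
  fixes x y :: "real vec"
  assumes "x \<in> carrier_vec d" "y \<in> carrier_vec d" and t: "t > 0"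
  shows "2 * \<bar>x \<bullet> y\<bar> \<le> t * (x \<bullet> x) + (y \<bullet> y) / t"
proof -
  have c: "\<bar>x \<bullet> y\<bar> \<le> sqrt (x \<bullet> x) * sqrt (y \<bullet> y)"
    using cs_vec[OF assms(1,2)] sp_self_ge0[of x] sp_self_ge0[of y]
    by (metis real_sqrt_abs real_sqrt_le_mono real_sqrt_mult)
  have "2 * (sqrt (x \<bullet> x) * sqrt (y \<bullet> y)) \<le> t * (x \<bullet> x) + (y \<bullet> y) / t"
  proof -
    let ?a = "sqrt (x \<bullet> x)" and ?b = "sqrt (y \<bullet> y)"
    have "0 \<le> (t * ?a - ?b)^2 / t" using t by simp
    also have "(t * ?a - ?b)^2 / t = t * ?a^2 - 2 * (?a * ?b) + ?b^2 / t"
      using t by (simp add: power2_eq_square field_simps)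
    finally show ?thesis using sp_self_ge0[of x] sp_self_ge0[of y] by simp
  qed
  with c show ?thesis by linarith
qed

lemma diag_mult_vec:
  assumes "v \<in> carrier_vec n"
  shows "mat_diag n f *\<^sub>v v = vec n (\<lambda>i. f i * v $ i)"
proof (rule eq_vecI)
  fix i assume i: "i < dim_vec (vec n (\<lambda>i. f i * v $ i))"
  hence i: "i < n" by simp
  have "row (mat_diag n f) i \<bullet> v = (\<Sum>j\<in>{0..<n}. (if i = j then f j * v $ j else 0))"
    unfolding scalar_prod_def mat_diag_def using assms i by (intro sum.cong) auto
  also have "\<dots> = f i * v $ i" using i by simp
  finally show "(mat_diag n f *\<^sub>v v) $ i = vec n (\<lambda>i. f i * v $ i) $ i"
    using i by (simp add: mat_diag_def)
qed (simp add: mat_diag_def)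

lemma fro_sq: "(fro_norm B)^2 = (\<Sum>i<dim_row B. \<Sum>j<dim_col B. (B $$ (i,j))^2)"
  unfolding fro_norm_def by (simp add: sum_nonneg)

lemma fro_ge0: "fro_norm B \<ge> 0"
  unfolding fro_norm_def by (simp add: sum_nonneg)

lemma row_sp_sq: "i < dim_row (B::real mat) \<Longrightarrow> row B i \<bullet> row B i = (\<Sum>j<dim_col B. (B $$ (i,j))^2)"
  unfolding sp_self_sum by (auto intro!: sum.cong)

lemma norm_mult_bound:
  fixes B :: "real mat"
  assumes B: "B \<in> carrier_mat d1 d2" and x: "x \<in> carrier_vec d2"
  shows "(B *\<^sub>v x) \<bullet> (B *\<^sub>v x) \<le> (fro_norm B)^2 * (x \<bullet> x)"
proof -
  have "(B *\<^sub>v x) \<bullet> (B *\<^sub>v x) = (\<Sum>i<d1. (row B i \<bullet> x)^2)"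
    using B by (simp add: sp_self_sum)
  also have "\<dots> \<le> (\<Sum>i<d1. (row B i \<bullet> row B i) * (x \<bullet> x))"
    using B x by (intro sum_mono cs_vec[of _ d2]) auto
  also have "\<dots> = (\<Sum>i<d1. (\<Sum>j<d2. (B $$ (i,j))^2)) * (x \<bullet> x)"
    using B by (auto simp: sum_distrib_right row_sp_sq intro!: sum.cong)
  also have "\<dots> = (fro_norm B)^2 * (x \<bullet> x)"
    using B by (simp add: fro_sq)
  finally show ?thesis .
qed

lemma quad_bound:
  fixes B :: "real mat"
  assumes B: "B \<in> carrier_mat d d" and x: "x \<in> carrier_vec d"
  shows "\<bar>x \<bullet> (B *\<^sub>v x)\<bar> \<le> fro_norm B * (x \<bullet> x)"
proof -
  have "(x \<bullet> (B *\<^sub>v x))^2 \<le> (x \<bullet> x) * ((B *\<^sub>v x) \<bullet> (B *\<^sub>v x))"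
    using B x by (intro cs_vec[of _ d]) auto
  also have "\<dots> \<le> (x \<bullet> x) * ((fro_norm B)^2 * (x \<bullet> x))"
    using norm_mult_bound[OF B x] sp_self_ge0[of x] by (intro mult_left_mono) auto
  also have "\<dots> = (fro_norm B * (x \<bullet> x))^2" by (simp add: power2_eq_square)
  finally have "\<bar>x \<bullet> (B *\<^sub>v x)\<bar>^2 \<le> (fro_norm B * (x \<bullet> x))^2" by simp
  thus ?thesis
    by (rule power2_le_imp_le) (rule mult_nonneg_nonneg[OF fro_ge0 sp_self_ge0])
qed



lemma sq_minus:
  fixes x z :: "real vec"
  assumes "x \<in> carrier_vec d" "z \<in> carrier_vec d"
  shows "(x - z) \<bullet> (x - z) = x \<bullet> x - 2 * (x \<bullet> z) + z \<bullet> z"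
proof -
  have "(x - z) \<bullet> (x - z) = x \<bullet> (x - z) - z \<bullet> (x - z)"
    using assms by (intro minus_scalar_prod_distrib[of _ d]) auto
  also have "\<dots> = x \<bullet> x - x \<bullet> z - (z \<bullet> x - z \<bullet> z)"
    using assms by (simp add: scalar_prod_minus_distrib[of _ d])
  also have "z \<bullet> x = x \<bullet> z" using assms by (intro comm_scalar_prod[of _ d])
  finally show ?thesis by simp
qed

lemma sq_plus:
  fixes x z :: "real vec"
  assumes "x \<in> carrier_vec d" "z \<in> carrier_vec d"
  shows "(x + z) \<bullet> (x + z) = x \<bullet> x + 2 * (x \<bullet> z) + z \<bullet> z"
proof -
  have "(x + z) \<bullet> (x + z) = x \<bullet> (x + z) + z \<bullet> (x + z)"
    using assms by (intro add_scalar_prod_distrib[of _ d]) auto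
  also have "\<dots> = x \<bullet> x + x \<bullet> z + (z \<bullet> x + z \<bullet> z)"
    using assms by (simp add: scalar_prod_add_distrib[of _ d])
  also have "z \<bullet> x = x \<bullet> z" using assms by (intro comm_scalar_prod[of _ d])
  finally show ?thesis by simp
qed

lemma sp_transpose:
  fixes A :: "real mat"
  assumes "A \<in> carrier_mat nr nc" "x \<in> carrier_vec nc" "y \<in> carrier_vec nr"
  shows "y \<bullet> (A *\<^sub>v x) = (transpose_mat A *\<^sub>v y) \<bullet> x"
  using transpose_vec_mult_scalar[OF assms] by simp

lemma orth_sp:
  fixes U :: "real mat"
  assumes U: "U \<in> carrier_mat d q" and o: "transpose_mat U * U = 1\<^sub>m q"
    and c: "c \<in> carrier_vec q" and c': "c' \<in> carrier_vec q"
  shows "(U *\<^sub>v c) \<bullet> (U *\<^sub>v c') = c \<bullet> c'"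
proof -
  have "(U *\<^sub>v c) \<bullet> (U *\<^sub>v c') = (transpose_mat U *\<^sub>v (U *\<^sub>v c)) \<bullet> c'"
    using U c c' by (intro sp_transpose[of _ d q]) auto
  also have "transpose_mat U *\<^sub>v (U *\<^sub>v c) = (transpose_mat U * U) *\<^sub>v c"
    using U c by (intro assoc_mult_mat_vec[symmetric, of _ q d _ q]) auto
  also have "\<dots> = c" using o c by simp
  finally show ?thesis .
qed

lemma bessel:
  fixes U :: "real mat"
  assumes U: "U \<in> carrier_mat d q" and o: "transpose_mat U * U = 1\<^sub>m q"
    and x: "x \<in> carrier_vec d"
  shows "(transpose_mat U *\<^sub>v x) \<bullet> (transpose_mat U *\<^sub>v x) \<le> x \<bullet> x"
proof -
  define y where "y = transpose_mat U *\<^sub>v x"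
  have y: "y \<in> carrier_vec q" using U x unfolding y_def by auto
  have Uy: "U *\<^sub>v y \<in> carrier_vec d" using U y by auto
  have "0 \<le> (x - U *\<^sub>v y) \<bullet> (x - U *\<^sub>v y)" by (rule sp_self_ge0)
  also have "\<dots> = x \<bullet> x - 2 * (x \<bullet> (U *\<^sub>v y)) + (U *\<^sub>v y) \<bullet> (U *\<^sub>v y)"
    using x Uy by (rule sq_minus)
  also have "x \<bullet> (U *\<^sub>v y) = y \<bullet> y" unfolding y_def using U x by (intro sp_transpose[of _ d q]) auto
  also have "(U *\<^sub>v y) \<bullet> (U *\<^sub>v y) = y \<bullet> y" using orth_sp[OF U o y y] .
  finally show ?thesis unfolding y_def by simp
qed

lemma orth_square_other:
  fixes V :: "real mat"
  assumes V: "V \<in> carrier_mat p p" and o: "transpose_mat V * V = 1\<^sub>m p"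
  shows "transpose_mat (transpose_mat V) * transpose_mat V = 1\<^sub>m p"
  using mat_mult_left_right_inverse[OF _ V o] V by simp

lemma parseval:
  fixes V :: "real mat"
  assumes V: "V \<in> carrier_mat p p" and o: "transpose_mat V * V = 1\<^sub>m p"
    and x: "x \<in> carrier_vec p"
  shows "(transpose_mat V *\<^sub>v x) \<bullet> (transpose_mat V *\<^sub>v x) = x \<bullet> x"
  using orth_sp[of "transpose_mat V" p p, OF _ orth_square_other[OF V o] x x] V by simp

lemma transpose_vec_index:
  fixes U :: "real mat"
  assumes "U \<in> carrier_mat d q" "x \<in> carrier_vec d" "a < q"
  shows "(transpose_mat U *\<^sub>v x) $ a = col U a \<bullet> x"
  using assms by (simp add: row_transpose)

lemma kf_weights:
  fixes d c :: "nat \<Rightarrow> real"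
  assumes kp: "k \<le> p" and k1: "1 \<le> k"
    and dn: "\<forall>l<p. 0 \<le> d l" and dd: "\<forall>a b. a \<le> b \<longrightarrow> b < p \<longrightarrow> d b \<le> d a"
    and cb: "\<forall>l<p. 0 \<le> c l \<and> c l \<le> g" and cs: "(\<Sum>l<p. c l) \<le> real k * g"
  shows "(\<Sum>l<p. d l * c l) \<le> g * (\<Sum>l<k. d l)"
proof -
  define t where "t = d (k - 1)"
  have split: "\<And>f::nat\<Rightarrow>real. (\<Sum>l<p. f l) = (\<Sum>l<k. f l) + (\<Sum>l\<in>{k..<p}. f l)"
    using kp by (metis lessThan_atLeast0 sum.atLeastLessThan_concat zero_le)
  have t1: "\<forall>l\<in>{k..<p}. d l \<le> t" using dd k1 unfolding t_def by auto
  have t2: "\<forall>l<k. t \<le> d l" using dd k1 kp unfolding t_def by auto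
  have tn: "0 \<le> t" using dn k1 kp unfolding t_def by auto
  have "(\<Sum>l\<in>{k..<p}. d l * c l) \<le> (\<Sum>l\<in>{k..<p}. t * c l)"
    using t1 cb by (intro sum_mono mult_right_mono) auto
  also have "\<dots> = t * ((\<Sum>l<p. c l) - (\<Sum>l<k. c l))"
    using split[of c] by (simp add: sum_distrib_left)
  also have "\<dots> \<le> t * (real k * g - (\<Sum>l<k. c l))"
    using cs tn by (intro mult_left_mono) auto
  also have "\<dots> = (\<Sum>l<k. t * (g - c l))"
    by (simp add: sum_distrib_left sum_subtractf algebra_simps)
  also have "\<dots> \<le> (\<Sum>l<k. d l * (g - c l))"
    using t2 cb kp by (intro sum_mono mult_right_mono) auto
  finally have "(\<Sum>l\<in>{k..<p}. d l * c l) \<le> (\<Sum>l<k. d l * (g - c l))" .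
  hence "(\<Sum>l<p. d l * c l) \<le> (\<Sum>l<k. d l * c l) + (\<Sum>l<k. d l * (g - c l))"
    using split[of "\<lambda>l. d l * c l"] by simp
  also have "\<dots> = g * (\<Sum>l<k. d l)"
    by (simp add: sum.distrib[symmetric] sum_distrib_left algebra_simps)
  finally show ?thesis .
qed

lemma kernel_exists:
  fixes z :: "nat \<Rightarrow> real vec"
  assumes k1: "1 \<le> k" and z: "\<forall>l<k-1. z l \<in> carrier_vec k"
  shows "\<exists>y. y \<in> carrier_vec k \<and> y \<noteq> 0\<^sub>v k \<and> (\<forall>l<k-1. z l \<bullet> y = 0)"
proof -
  define c where "c = (\<lambda>l. if l < k - 1 then z l else 0\<^sub>v k)"
  define B where "B = mat\<^sub>r k k (\<lambda>i. if i = k - 1 then 0\<^sub>v k else c i)"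
  have cc: "c \<in> {0..<k} \<rightarrow> carrier_vec k" using z unfolding c_def by auto
  have "det B = 0" unfolding B_def using k1 cc by (intro det_row_0) auto
  moreover have Bc: "B \<in> carrier_mat k k" unfolding B_def by auto
  ultimately obtain y where y: "y \<in> carrier_vec k" "y \<noteq> 0\<^sub>v k" "B *\<^sub>v y = 0\<^sub>v k"
    using det_0_iff_vec_prod_zero[OF Bc] by auto
  have "\<forall>l<k-1. z l \<bullet> y = 0"
  proof (intro allI impI)
    fix l assume l: "l < k - 1"
    have "(B *\<^sub>v y) $ l = 0" using y(3) l by simp
    moreover have "row B l = z l" unfolding B_def c_def using l z by auto
    ultimately show "z l \<bullet> y = 0" using l Bc by simp
  qed
  thus ?thesis using y by auto
qed



lemma transpose_diag[simp]: "transpose_mat (mat_diag n f) = mat_diag n f"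
  by (intro eq_matI) (auto simp: mat_diag_def)

lemma svd_gram:
  fixes U Vm :: "real mat"
  assumes U: "U \<in> carrier_mat d q" and Vm: "Vm \<in> carrier_mat e q"
    and o: "transpose_mat U * U = 1\<^sub>m q"
    and A: "A = U * mat_diag q f * transpose_mat Vm"
  shows "transpose_mat A * A = Vm * mat_diag q (\<lambda>i. (f i)^2) * transpose_mat Vm"
proof -
  let ?D = "mat_diag q f"
  have D: "?D \<in> carrier_mat q q" by simp
  have UD: "U * ?D \<in> carrier_mat d q" using U by simp
  have At: "transpose_mat A = Vm * ?D * transpose_mat U"
  proof -
    have "transpose_mat A = transpose_mat (transpose_mat Vm) * transpose_mat (U * ?D)"
      unfolding A using UD Vm by (intro transpose_mult) auto
    also have "transpose_mat (U * ?D) = ?D * transpose_mat U"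
      using transpose_mult[OF U D] by simp
    finally show ?thesis using Vm D U by (simp add: assoc_mult_mat[of _ e q _ q _ d])
  qed
  have Ut: "transpose_mat U \<in> carrier_mat q d" using U by simp
  have Vt: "transpose_mat Vm \<in> carrier_mat q e" using Vm by simp
  have VD: "Vm * ?D \<in> carrier_mat e q" using Vm by simp
  have DV: "?D * transpose_mat Vm \<in> carrier_mat q e" by (rule mult_carrier_mat[OF D Vt])
  have "transpose_mat A * A = (Vm * ?D * transpose_mat U) * (U * ?D * transpose_mat Vm)"
    unfolding At by (simp only: A)
  also have "\<dots> = Vm * ?D * (transpose_mat U * (U * ?D * transpose_mat Vm))"
  proof -
    have UDV: "U * ?D * transpose_mat Vm \<in> carrier_mat d e" by (rule mult_carrier_mat[OF UD]) (use Vm in simp)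
    show ?thesis by (rule assoc_mult_mat[OF VD Ut UDV])
  qed
  also have "transpose_mat U * (U * ?D * transpose_mat Vm) = (transpose_mat U * U) * (?D * transpose_mat Vm)"
  proof -
    have "U * ?D * transpose_mat Vm = U * (?D * transpose_mat Vm)"
      using U D Vt by (intro assoc_mult_mat) auto
    moreover have "?D * transpose_mat Vm \<in> carrier_mat q e" by (rule mult_carrier_mat[OF D Vt])
    ultimately show ?thesis using assoc_mult_mat[OF Ut U, of "?D * transpose_mat Vm" e] by simp
  qed
  also have "\<dots> = ?D * transpose_mat Vm" using o left_mult_one_mat[OF DV] by simp
  also have "Vm * ?D * (?D * transpose_mat Vm) = Vm * (?D * ?D) * transpose_mat Vm"
    using assoc_mult_mat[OF Vm D DV] assoc_mult_mat[OF D D Vt]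
      assoc_mult_mat[OF Vm mult_carrier_mat[OF D D] Vt] by simp
  also have "?D * ?D = mat_diag q (\<lambda>i. (f i)^2)" by (simp add: mat_diag_diag power2_eq_square)
  finally show ?thesis .
qed

lemma sandwich_apply:
  fixes U :: "real mat"
  assumes U: "U \<in> carrier_mat d q" and x: "x \<in> carrier_vec d"
  shows "(U * mat_diag q g * transpose_mat U) *\<^sub>v x = U *\<^sub>v vec q (\<lambda>a. g a * (col U a \<bullet> x))"
proof -
  have "(U * mat_diag q g * transpose_mat U) *\<^sub>v x = (U * mat_diag q g) *\<^sub>v (transpose_mat U *\<^sub>v x)"
    using U x by (intro assoc_mult_mat_vec[of _ d q]) auto
  also have "\<dots> = U *\<^sub>v (mat_diag q g *\<^sub>v (transpose_mat U *\<^sub>v x))"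
    using U x by (intro assoc_mult_mat_vec[of _ d q _ q]) auto
  also have "mat_diag q g *\<^sub>v (transpose_mat U *\<^sub>v x) = vec q (\<lambda>a. g a * (transpose_mat U *\<^sub>v x) $ a)"
    using U x by (intro diag_mult_vec) auto
  also have "\<dots> = vec q (\<lambda>a. g a * (col U a \<bullet> x))"
    using U x by (intro eq_vecI) auto
  finally show ?thesis .
qed

lemma orth_coord:
  fixes U :: "real mat"
  assumes U: "U \<in> carrier_mat d q" and o: "transpose_mat U * U = 1\<^sub>m q"
    and c: "c \<in> carrier_vec q" and a: "a < q"
  shows "col U a \<bullet> (U *\<^sub>v c) = c $ a"
proof -
  have "col U a = U *\<^sub>v unit_vec q a"
  proof -
    have "col U a = col (U * 1\<^sub>m q) a" using U by simp
    also have "\<dots> = U *\<^sub>v col (1\<^sub>m q) a" using U a by (intro col_mult2) auto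
    finally show ?thesis using a by simp
  qed
  hence "col U a \<bullet> (U *\<^sub>v c) = unit_vec q a \<bullet> c"
    using orth_sp[OF U o _ c, of "unit_vec q a"] by simp
  thus ?thesis using c a by simp
qed

lemma sandwich_apply_orth:
  fixes U :: "real mat"
  assumes U: "U \<in> carrier_mat d q" and o: "transpose_mat U * U = 1\<^sub>m q"
    and c: "c \<in> carrier_vec q"
  shows "(U * mat_diag q g * transpose_mat U) *\<^sub>v (U *\<^sub>v c) = U *\<^sub>v vec q (\<lambda>a. g a * c $ a)"
proof -
  have "vec q (\<lambda>a. g a * (col U a \<bullet> (U *\<^sub>v c))) = vec q (\<lambda>a. g a * c $ a)"
    using orth_coord[OF U o c] by (intro eq_vecI) auto
  thus ?thesis using sandwich_apply[OF U, of "U *\<^sub>v c" g] U c by simp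
qed

lemma sandwich_quad:
  fixes U :: "real mat"
  assumes U: "U \<in> carrier_mat d q" and x: "x \<in> carrier_vec d"
  shows "x \<bullet> ((U * mat_diag q g * transpose_mat U) *\<^sub>v x) = (\<Sum>a<q. g a * (col U a \<bullet> x)^2)"
proof -
  have "x \<bullet> ((U * mat_diag q g * transpose_mat U) *\<^sub>v x) = x \<bullet> (U *\<^sub>v vec q (\<lambda>a. g a * (col U a \<bullet> x)))"
    using sandwich_apply[OF U x] by simp
  also have "\<dots> = (transpose_mat U *\<^sub>v x) \<bullet> vec q (\<lambda>a. g a * (col U a \<bullet> x))"
    using U x by (intro sp_transpose[of _ d q]) auto
  also have "\<dots> = (\<Sum>a<q. (transpose_mat U *\<^sub>v x) $ a * (g a * (col U a \<bullet> x)))"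
    using U x by (simp add: scalar_prod_def atLeast0LessThan)
  also have "\<dots> = (\<Sum>a<q. (col U a \<bullet> x) * (g a * (col U a \<bullet> x)))"
    using U x by (intro sum.cong) auto
  finally show ?thesis by (simp add: power2_eq_square algebra_simps)
qed

lemma sum_coord_sq:
  fixes U :: "real mat"
  assumes U: "U \<in> carrier_mat d q" and x: "x \<in> carrier_vec d"
  shows "(\<Sum>a<q. (col U a \<bullet> x)^2) = (transpose_mat U *\<^sub>v x) \<bullet> (transpose_mat U *\<^sub>v x)"
  using U x by (auto simp: sp_self_sum intro!: sum.cong)

lemma fro_cols:
  fixes B :: "real mat"
  assumes "B \<in> carrier_mat d e"
  shows "(fro_norm B)^2 = (\<Sum>j<e. col B j \<bullet> col B j)"
  using assms unfolding fro_sq by (subst sum.swap) (auto simp: sp_self_sum intro!: sum.cong)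

lemma fro_rank_sum:
  fixes U V :: "real mat" and f :: "nat \<Rightarrow> real"
  assumes U: "U \<in> carrier_mat m r" and V: "V \<in> carrier_mat n r"
    and oU: "transpose_mat U * U = 1\<^sub>m r" and oV: "transpose_mat V * V = 1\<^sub>m r"
    and L: "L \<subseteq> {..<r}"
  shows "(\<Sum>i<m. \<Sum>j<n. (\<Sum>l\<in>L. f l * U $$ (i,l) * V $$ (j,l))^2) = (\<Sum>l\<in>L. (f l)^2)"
proof -
  have fin: "finite L" using L finite_subset by blast
  define c where "c = (\<lambda>i. vec r (\<lambda>l. if l \<in> L then f l * U $$ (i,l) else 0))"
  have c: "\<And>i. c i \<in> carrier_vec r" unfolding c_def by simp
  have row_i: "\<And>i. i < m \<Longrightarrow> (\<Sum>j<n. (\<Sum>l\<in>L. f l * U $$ (i,l) * V $$ (j,l))^2) = (\<Sum>l\<in>L. (f l)^2 * (U $$ (i,l))^2)"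
  proof -
    fix i assume i: "i < m"
    have e1: "\<And>j. j < n \<Longrightarrow> row V j \<bullet> c i = (\<Sum>l\<in>L. f l * U $$ (i,l) * V $$ (j,l))"
    proof -
      fix j assume j: "j < n"
      have "row V j \<bullet> c i = (\<Sum>l\<in>{0..<r}. V $$ (j,l) * (if l \<in> L then f l * U $$ (i,l) else 0))"
        using V j unfolding c_def by (simp add: scalar_prod_def)
      also have "\<dots> = (\<Sum>l\<in>{0..<r} \<inter> L. V $$ (j,l) * (f l * U $$ (i,l)))"
        by (simp add: if_distrib sum.inter_restrict[symmetric] cong: if_cong)
      also have "{0..<r} \<inter> L = L" using L by auto
      finally show "row V j \<bullet> c i = (\<Sum>l\<in>L. f l * U $$ (i,l) * V $$ (j,l))"
        by (simp add: algebra_simps)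
    qed
    have "(\<Sum>j<n. (\<Sum>l\<in>L. f l * U $$ (i,l) * V $$ (j,l))^2) = (V *\<^sub>v c i) \<bullet> (V *\<^sub>v c i)"
      using V by (auto simp: sp_self_sum e1 intro!: sum.cong)
    also have "\<dots> = c i \<bullet> c i" using orth_sp[OF V oV c c] .
    also have "\<dots> = (\<Sum>l<r. (if l \<in> L then (f l * U $$ (i,l))^2 else 0))"
      unfolding sp_self_sum c_def by (auto intro!: sum.cong)
    also have "\<dots> = (\<Sum>l\<in>{..<r} \<inter> L. (f l * U $$ (i,l))^2)"
      by (simp add: sum.inter_restrict)
    also have "{..<r} \<inter> L = L" using L by auto
    finally show "(\<Sum>j<n. (\<Sum>l\<in>L. f l * U $$ (i,l) * V $$ (j,l))^2) = (\<Sum>l\<in>L. (f l)^2 * (U $$ (i,l))^2)"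
      by (simp add: power_mult_distrib)
  qed
  have colU: "\<And>l. l < r \<Longrightarrow> (\<Sum>i<m. (U $$ (i,l))^2) = 1"
  proof -
    fix l assume l: "l < r"
    have "(\<Sum>i<m. (U $$ (i,l))^2) = col U l \<bullet> col U l" using U l by (auto simp: sp_self_sum)
    also have "\<dots> = (transpose_mat U * U) $$ (l,l)" using U l by simp
    finally show "(\<Sum>i<m. (U $$ (i,l))^2) = 1" using oU l by simp
  qed
  have "(\<Sum>i<m. \<Sum>j<n. (\<Sum>l\<in>L. f l * U $$ (i,l) * V $$ (j,l))^2) = (\<Sum>i<m. \<Sum>l\<in>L. (f l)^2 * (U $$ (i,l))^2)"
    using row_i by simp
  also have "\<dots> = (\<Sum>l\<in>L. (f l)^2 * (\<Sum>i<m. (U $$ (i,l))^2))"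
    by (subst sum.swap) (simp add: sum_distrib_left)
  also have "\<dots> = (\<Sum>l\<in>L. (f l)^2)" using colU L by (intro sum.cong) auto
  finally show ?thesis .
qed



lemma sum_if_lt:
  fixes g :: "nat \<Rightarrow> real"
  assumes "k \<le> r"
  shows "(\<Sum>a<r. if a < k then g a else 0) = (\<Sum>a<k. g a)"
proof -
  have "(\<Sum>a<r. if a < k then g a else 0) = (\<Sum>a\<in>{a\<in>{..<r}. a < k}. g a)"
    by (subst sum.inter_filter) auto
  also have "{a\<in>{..<r}. a < k} = {..<k}" using assms by auto
  finally show ?thesis .
qed

lemma vec_pos:
  fixes x :: "real vec"
  assumes "x \<in> carrier_vec d" "x \<noteq> 0\<^sub>v d"
  shows "x \<bullet> x > 0"
proof -
  obtain i where i: "i < d" "x $ i \<noteq> 0" using assms by (metis eq_vecI carrier_vecD index_zero_vec)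
  have "(x $ i)^2 \<le> (\<Sum>j<d. (x$j)^2)"
    using i by (intro member_le_sum) auto
  moreover have "(x $ i)^2 > 0" using i by simp
  ultimately have "0 < (\<Sum>j<d. (x$j)^2)" by linarith
  thus ?thesis using assms by (simp add: sp_self_sum)
qed

lemma mat_split:
  fixes M N :: "real mat"
  assumes "M \<in> carrier_mat d d" "N \<in> carrier_mat d d" "w \<in> carrier_vec d"
  shows "N *\<^sub>v w = M *\<^sub>v w - (M - N) *\<^sub>v w"
proof -
  have "(M - N) *\<^sub>v w = M *\<^sub>v w - N *\<^sub>v w" using assms by (intro minus_mult_distrib_mat_vec) auto
  thus ?thesis using assms by (intro eq_vecI) auto
qed

lemma mat_split_plus:
  fixes G Q :: "real mat"
  assumes "G \<in> carrier_mat d d" "Q \<in> carrier_mat d d" "w \<in> carrier_vec d"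
  shows "G *\<^sub>v w = Q *\<^sub>v w + (G - Q) *\<^sub>v w"
proof -
  have "(G - Q) *\<^sub>v w = G *\<^sub>v w - Q *\<^sub>v w" using assms by (intro minus_mult_distrib_mat_vec) auto
  thus ?thesis using assms by (intro eq_vecI) auto
qed

lemma quad_minus:
  fixes P Q :: "real mat"
  assumes "P \<in> carrier_mat d d" "Q \<in> carrier_mat d d" "x \<in> carrier_vec d"
  shows "x \<bullet> ((P - Q) *\<^sub>v x) = x \<bullet> (P *\<^sub>v x) - x \<bullet> (Q *\<^sub>v x)"
proof -
  have "(P - Q) *\<^sub>v x = P *\<^sub>v x - Q *\<^sub>v x" using assms by (intro minus_mult_distrib_mat_vec) auto
  thus ?thesis using assms by (simp add: scalar_prod_minus_distrib[of _ d])
qed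

lemma gram_quad1:
  fixes S :: "real mat"
  assumes S: "S \<in> carrier_mat m p" and x: "x \<in> carrier_vec p"
  shows "x \<bullet> ((transpose_mat S * S) *\<^sub>v x) = (S *\<^sub>v x) \<bullet> (S *\<^sub>v x)"
proof -
  have "(transpose_mat S * S) *\<^sub>v x = transpose_mat S *\<^sub>v (S *\<^sub>v x)"
    using S x by (intro assoc_mult_mat_vec[of _ p m _ p]) auto
  moreover have "x \<bullet> (transpose_mat S *\<^sub>v (S *\<^sub>v x)) = (S *\<^sub>v x) \<bullet> (S *\<^sub>v x)"
    using sp_transpose[of "transpose_mat S" p m "S *\<^sub>v x" x] S x by auto
  ultimately show ?thesis by simp
qed

lemma gram_quad2:
  fixes S :: "real mat"
  assumes S: "S \<in> carrier_mat m p" and w: "w \<in> carrier_vec m"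
  shows "w \<bullet> ((S * transpose_mat S) *\<^sub>v w) = (transpose_mat S *\<^sub>v w) \<bullet> (transpose_mat S *\<^sub>v w)"
  using gram_quad1[of "transpose_mat S" p m w] S w by simp

lemma gram_apply2:
  fixes S :: "real mat"
  assumes S: "S \<in> carrier_mat m p" and w: "w \<in> carrier_vec m"
  shows "S *\<^sub>v (transpose_mat S *\<^sub>v w) = (S * transpose_mat S) *\<^sub>v w"
  using S w by (intro assoc_mult_mat_vec[symmetric, of _ m p _ m]) auto

lemma gram_apply1:
  fixes S :: "real mat"
  assumes S: "S \<in> carrier_mat m p" and w: "w \<in> carrier_vec p"
  shows "transpose_mat S *\<^sub>v (S *\<^sub>v w) = (transpose_mat S * S) *\<^sub>v w"
  using S w by (intro assoc_mult_mat_vec[symmetric, of _ p m _ p]) auto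

lemma sandwich_orth_quad:
  fixes U :: "real mat"
  assumes U: "U \<in> carrier_mat d q" and o: "transpose_mat U * U = 1\<^sub>m q" and c: "c \<in> carrier_vec q"
  shows "(U *\<^sub>v c) \<bullet> ((U * mat_diag q g * transpose_mat U) *\<^sub>v (U *\<^sub>v c)) = (\<Sum>a<q. g a * (c $ a)^2)"
proof -
  have "(U *\<^sub>v c) \<bullet> ((U * mat_diag q g * transpose_mat U) *\<^sub>v (U *\<^sub>v c)) = c \<bullet> vec q (\<lambda>a. g a * c $ a)"
    unfolding sandwich_apply_orth[OF U o c] by (rule orth_sp[OF U o c]) simp
  also have "\<dots> = (\<Sum>a<q. g a * (c $ a)^2)"
    using c by (auto simp: scalar_prod_def atLeast0LessThan power2_eq_square intro!: sum.cong)
  finally show ?thesis .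
qed

lemma orth_col_norm:
  fixes U :: "real mat"
  assumes U: "U \<in> carrier_mat d q" and o: "transpose_mat U * U = 1\<^sub>m q" and a: "a < q"
  shows "col U a \<bullet> col U a = 1"
proof -
  have "(transpose_mat U * U) $$ (a,a) = col U a \<bullet> col U a" using U a by simp
  thus ?thesis using o a by simp
qed

lemma col_as_mult:
  fixes U :: "real mat"
  assumes U: "U \<in> carrier_mat d q" and a: "a < q"
  shows "col U a = U *\<^sub>v unit_vec q a"
proof -
  have "col U a = col (U * 1\<^sub>m q) a" using U by simp
  also have "\<dots> = U *\<^sub>v col (1\<^sub>m q) a" using U a by (intro col_mult2) auto
  finally show ?thesis using a by simp
qed



locale core =
  fixes A UA VA Vf S Q :: "real mat" and m n r k p :: nat and sA s :: "nat \<Rightarrow> real" and tau b :: real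
  assumes A: "A \<in> carrier_mat m n"
    and UA: "UA \<in> carrier_mat m r" and VA: "VA \<in> carrier_mat n r"
    and oU: "transpose_mat UA * UA = 1\<^sub>m r" and oV: "transpose_mat VA * VA = 1\<^sub>m r"
    and sA_pos: "\<forall>l<r. sA l > 0"
    and svd: "A = UA * mat_diag r sA * transpose_mat VA"
    and k1: "1 \<le> k" and kr: "k \<le> r" and kp: "k \<le> p"
    and S: "S \<in> carrier_mat m p"
    and Vf: "Vf \<in> carrier_mat p p" and oF: "transpose_mat Vf * Vf = 1\<^sub>m p"
    and s_nonneg: "\<forall>l<p. s l \<ge> 0" and s_dec: "\<forall>a b. a \<le> b \<longrightarrow> b < p \<longrightarrow> s b \<le> s a"
    and Qdef: "Q = Vf * mat_diag p (\<lambda>l. (s l)^2) * transpose_mat Vf"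
    and E1: "fro_norm (A * transpose_mat A - S * transpose_mat S) \<le> tau"
    and E2: "fro_norm (transpose_mat S * S - Q) \<le> tau"
    and b: "0 < b" and b_le: "\<forall>l<r. b \<le> (sA l)^2"
    and tau: "0 < tau" and small: "1372 * tau \<le> b"
begin

abbreviation "M \<equiv> A * transpose_mat A"
abbreviation "N \<equiv> S * transpose_mat S"
abbreviation "E \<equiv> M - N"
abbreviation "G \<equiv> transpose_mat S * S"
abbreviation "D \<equiv> G - Q"

definition "beta = tau / b"

lemma beta_pos: "0 < beta" and beta_small: "1372 * beta \<le> 1" and btau: "beta * b = tau"
  using tau b small unfolding beta_def by (auto simp: field_simps)

lemma M_car: "M \<in> carrier_mat m m" using A by simp
lemma N_car: "N \<in> carrier_mat m m" using S by simp
lemma E_car: "E \<in> carrier_mat m m" using M_car N_car by (simp add: minus_carrier_mat)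
lemma G_car: "G \<in> carrier_mat p p" using S by simp
lemma Q_car: "Q \<in> carrier_mat p p" unfolding Qdef using Vf
  by (intro mult_carrier_mat[of _ p p]) auto
lemma D_car: "D \<in> carrier_mat p p" using Q_car by (simp add: minus_carrier_mat)

lemma At: "transpose_mat A = VA * mat_diag r sA * transpose_mat UA"
proof -
  let ?D = "mat_diag r sA"
  have UD: "UA * ?D \<in> carrier_mat m r" using UA by simp
  have "transpose_mat A = transpose_mat (transpose_mat VA) * transpose_mat (UA * ?D)"
    unfolding svd using UD VA by (intro transpose_mult) auto
  also have "transpose_mat (UA * ?D) = ?D * transpose_mat UA"
    using transpose_mult[OF UA mat_diag_dim] by simp
  finally show ?thesis using VA UA by (simp add: assoc_mult_mat[of _ n r _ r _ m])
qed

lemma M_eq: "M = UA * mat_diag r (\<lambda>i. (sA i)^2) * transpose_mat UA"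
  using svd_gram[OF VA UA oV At] by simp

lemma AtA_eq: "transpose_mat A * A = VA * mat_diag r (\<lambda>i. (sA i)^2) * transpose_mat VA"
  using svd_gram[OF UA VA oU svd] .

lemma E_quad: "x \<in> carrier_vec m \<Longrightarrow> \<bar>x \<bullet> (E *\<^sub>v x)\<bar> \<le> tau * (x \<bullet> x)"
  using quad_bound[OF E_car, of x] E1 sp_self_ge0[of x] by (meson mult_right_mono order_trans)

lemma E_norm: "x \<in> carrier_vec m \<Longrightarrow> (E *\<^sub>v x) \<bullet> (E *\<^sub>v x) \<le> tau^2 * (x \<bullet> x)"
proof -
  assume x: "x \<in> carrier_vec m"
  have "(fro_norm E)^2 \<le> tau^2" using E1 fro_ge0[of E] by (intro power_mono) auto
  thus ?thesis using norm_mult_bound[OF E_car x] sp_self_ge0[of x] by (meson mult_right_mono order_trans)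
qed

lemma D_quad: "x \<in> carrier_vec p \<Longrightarrow> \<bar>x \<bullet> (D *\<^sub>v x)\<bar> \<le> tau * (x \<bullet> x)"
  using quad_bound[OF D_car, of x] E2 sp_self_ge0[of x] by (meson mult_right_mono order_trans)

definition "cy y = vec r (\<lambda>a. if a < k then y $ a / sA a else 0)"
definition "wv y = UA *\<^sub>v cy y"
definition "xv y = transpose_mat S *\<^sub>v wv y"
definition "zv f = vec k (\<lambda>a. (col UA a \<bullet> (S *\<^sub>v f)) / sA a)"

lemma cy_car[simp]: "cy y \<in> carrier_vec r" unfolding cy_def by simp
lemma wv_car[simp]: "wv y \<in> carrier_vec m" unfolding wv_def using UA by simp
lemma xv_car[simp]: "xv y \<in> carrier_vec p" unfolding xv_def using S by simp
lemma zv_car[simp]: "zv f \<in> carrier_vec k" unfolding zv_def by simp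

lemma wv_norm:
  assumes y: "y \<in> carrier_vec k"
  shows "wv y \<bullet> wv y = (\<Sum>a<k. (y $ a)^2 / (sA a)^2)" "wv y \<bullet> wv y \<le> (y \<bullet> y) / b"
proof -
  have "wv y \<bullet> wv y = cy y \<bullet> cy y" unfolding wv_def by (rule orth_sp[OF UA oU]) auto
  also have "\<dots> = (\<Sum>a<r. if a < k then (y $ a)^2 / (sA a)^2 else 0)"
    unfolding sp_self_sum cy_def by (auto intro!: sum.cong simp: power_divide)
  also have "\<dots> = (\<Sum>a<k. (y $ a)^2 / (sA a)^2)" using kr by (rule sum_if_lt)
  finally show 1: "wv y \<bullet> wv y = (\<Sum>a<k. (y $ a)^2 / (sA a)^2)" .
  have "(\<Sum>a<k. (y $ a)^2 / (sA a)^2) \<le> (\<Sum>a<k. (y $ a)^2 / b)"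
  proof (intro sum_mono)
    fix a assume "a \<in> {..<k}"
    hence "b \<le> (sA a)^2" using b_le kr by auto
    moreover have "0 < (sA a)^2 * b" using \<open>b \<le> (sA a)^2\<close> b by (intro mult_pos_pos) auto
    ultimately show "(y $ a)^2 / (sA a)^2 \<le> (y $ a)^2 / b" using b by (intro divide_left_mono) auto
  qed
  also have "\<dots> = (y \<bullet> y) / b" using y by (simp add: sp_self_sum sum_divide_distrib)
  finally show "wv y \<bullet> wv y \<le> (y \<bullet> y) / b" using 1 by simp
qed

lemma Mw:
  assumes y: "y \<in> carrier_vec k"
  shows "M *\<^sub>v wv y = UA *\<^sub>v vec r (\<lambda>a. if a < k then sA a * y $ a else 0)"
proof -
  have "M *\<^sub>v wv y = UA *\<^sub>v vec r (\<lambda>a. (sA a)^2 * cy y $ a)"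
    unfolding M_eq wv_def by (rule sandwich_apply_orth[OF UA oU]) simp
  also have "vec r (\<lambda>a. (sA a)^2 * cy y $ a) = vec r (\<lambda>a. if a < k then sA a * y $ a else 0)"
    using sA_pos kr unfolding cy_def by (intro eq_vecI) (auto simp: power2_eq_square)
  finally show ?thesis .
qed

lemma wMw:
  assumes y: "y \<in> carrier_vec k"
  shows "wv y \<bullet> (M *\<^sub>v wv y) = y \<bullet> y"
proof -
  have "wv y \<bullet> (M *\<^sub>v wv y) = (\<Sum>a<r. (sA a)^2 * (cy y $ a)^2)"
    unfolding M_eq wv_def by (rule sandwich_orth_quad[OF UA oU]) simp
  also have "\<dots> = (\<Sum>a<r. if a < k then (y $ a)^2 else 0)"
    using sA_pos kr unfolding cy_def by (intro sum.cong) (auto simp: power_divide)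
  also have "\<dots> = y \<bullet> y" using kr y by (simp add: sum_if_lt sp_self_sum)
  finally show ?thesis .
qed

lemma MwMw:
  assumes y: "y \<in> carrier_vec k"
  shows "(M *\<^sub>v wv y) \<bullet> (M *\<^sub>v wv y) = (\<Sum>a<k. (sA a)^2 * (y $ a)^2)"
    "(M *\<^sub>v wv y) \<bullet> (M *\<^sub>v wv y) \<ge> b * (y \<bullet> y)"
proof -
  have "(M *\<^sub>v wv y) \<bullet> (M *\<^sub>v wv y) = vec r (\<lambda>a. if a < k then sA a * y $ a else 0) \<bullet> vec r (\<lambda>a. if a < k then sA a * y $ a else 0)"
    unfolding Mw[OF y] by (rule orth_sp[OF UA oU]) auto
  also have "\<dots> = (\<Sum>a<r. if a < k then (sA a)^2 * (y $ a)^2 else 0)"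
    unfolding sp_self_sum by (auto intro!: sum.cong simp: power_mult_distrib)
  also have "\<dots> = (\<Sum>a<k. (sA a)^2 * (y $ a)^2)" using kr by (rule sum_if_lt)
  finally show 1: "(M *\<^sub>v wv y) \<bullet> (M *\<^sub>v wv y) = (\<Sum>a<k. (sA a)^2 * (y $ a)^2)" .
  have "b * (y \<bullet> y) = (\<Sum>a<k. b * (y $ a)^2)" using y by (simp add: sp_self_sum sum_distrib_left)
  also have "\<dots> \<le> (\<Sum>a<k. (sA a)^2 * (y $ a)^2)"
    using b_le kr by (intro sum_mono mult_right_mono) auto
  finally show "(M *\<^sub>v wv y) \<bullet> (M *\<^sub>v wv y) \<ge> b * (y \<bullet> y)" using 1 by simp
qed

lemma xv_sq:
  assumes y: "y \<in> carrier_vec k"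
  shows "xv y \<bullet> xv y = y \<bullet> y - wv y \<bullet> (E *\<^sub>v wv y)"
proof -
  have "xv y \<bullet> xv y = wv y \<bullet> (N *\<^sub>v wv y)" unfolding xv_def using gram_quad2[OF S wv_car] by simp
  also have "\<dots> = wv y \<bullet> (M *\<^sub>v wv y) - wv y \<bullet> (E *\<^sub>v wv y)"
    using quad_minus[OF M_car N_car wv_car] by simp
  finally show ?thesis using wMw[OF y] by simp
qed

lemma xv_norm:
  assumes y: "y \<in> carrier_vec k"
  shows "xv y \<bullet> xv y \<le> (1 + beta) * (y \<bullet> y)"
proof -
  have "\<bar>wv y \<bullet> (E *\<^sub>v wv y)\<bar> \<le> tau * (wv y \<bullet> wv y)" by (rule E_quad) simp
  also have "\<dots> \<le> tau * ((y \<bullet> y) / b)" using wv_norm(2)[OF y] tau by (intro mult_left_mono) auto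
  also have "\<dots> = beta * (y \<bullet> y)" unfolding beta_def by simp
  finally show ?thesis using xv_sq[OF y] by (simp add: algebra_simps)
qed

lemma Sxv:
  assumes y: "y \<in> carrier_vec k"
  shows "S *\<^sub>v xv y = M *\<^sub>v wv y - E *\<^sub>v wv y"
proof -
  have "S *\<^sub>v xv y = N *\<^sub>v wv y" unfolding xv_def by (rule gram_apply2[OF S]) simp
  also have "\<dots> = M *\<^sub>v wv y - E *\<^sub>v wv y" by (rule mat_split[OF M_car N_car]) simp
  finally show ?thesis .
qed

lemma K1:
  assumes y: "y \<in> carrier_vec k" and f: "f \<in> carrier_vec p"
  shows "f \<bullet> xv y = zv f \<bullet> y"
proof -
  have "f \<bullet> xv y = (S *\<^sub>v f) \<bullet> wv y"
    unfolding xv_def using sp_transpose[of "transpose_mat S" p m "wv y" f] S f by simp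
  also have "\<dots> = (transpose_mat UA *\<^sub>v (S *\<^sub>v f)) \<bullet> cy y"
    unfolding wv_def using S f UA by (intro sp_transpose[of _ m r]) auto
  also have "\<dots> = (\<Sum>a<r. (col UA a \<bullet> (S *\<^sub>v f)) * (if a < k then y $ a / sA a else 0))"
    unfolding cy_def using UA S f by (auto simp: scalar_prod_def atLeast0LessThan intro!: sum.cong)
  also have "\<dots> = (\<Sum>a<r. if a < k then (col UA a \<bullet> (S *\<^sub>v f)) / sA a * y $ a else 0)"
    by (intro sum.cong) auto
  also have "\<dots> = (\<Sum>a<k. (col UA a \<bullet> (S *\<^sub>v f)) / sA a * y $ a)" using kr by (rule sum_if_lt)
  also have "\<dots> = zv f \<bullet> y" unfolding zv_def using y by (simp add: scalar_prod_def atLeast0LessThan)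
  finally show ?thesis .
qed

lemma c_bound:
  assumes f: "f \<in> carrier_vec p" and f1: "f \<bullet> f = 1"
  shows "zv f \<bullet> zv f \<le> 1 + beta"
proof -
  let ?z = "zv f"
  have z: "?z \<in> carrier_vec k" by simp
  have e: "?z \<bullet> ?z = f \<bullet> xv ?z" using K1[OF z f] by simp
  have "(?z \<bullet> ?z)^2 \<le> (f \<bullet> f) * (xv ?z \<bullet> xv ?z)" unfolding e by (rule cs_vec[OF f xv_car])
  also have "\<dots> \<le> (1 + beta) * (?z \<bullet> ?z)" using f1 xv_norm[OF z] by simp
  finally have *: "(?z \<bullet> ?z)^2 \<le> (1 + beta) * (?z \<bullet> ?z)" .
  show ?thesis
  proof (cases "?z \<bullet> ?z = 0")
    case True thus ?thesis using beta_pos by simp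
  next
    case False
    hence "?z \<bullet> ?z > 0" using sp_self_ge0[of ?z] by simp
    thus ?thesis using * by (simp add: power2_eq_square)
  qed
qed

end


lemma unit_sum:
  fixes g :: "nat \<Rightarrow> real"
  assumes a: "a < k"
  shows "(\<Sum>a'<k. g a' * (unit_vec k a $ a')^2) = g a"
proof -
  have "(\<Sum>a'<k. g a' * (unit_vec k a $ a')^2) = (\<Sum>a'<k. if a' = a then g a else 0)"
    using a by (intro sum.cong) auto
  also have "\<dots> = g a" using a by simp
  finally show ?thesis .
qed

lemma unit_sum_div:
  fixes g :: "nat \<Rightarrow> real"
  assumes a: "a < k"
  shows "(\<Sum>a'<k. (unit_vec k a $ a')^2 / g a') = 1 / g a"
proof -
  have "(\<Sum>a'<k. (unit_vec k a $ a')^2 / g a') = (\<Sum>a'<k. if a' = a then 1 / g a else 0)"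
    using a by (intro sum.cong) auto
  also have "\<dots> = 1 / g a" using a by simp
  finally show ?thesis .
qed

context core begin

lemma col_Vf_car[simp]: "col Vf l \<in> carrier_vec p" using Vf by auto

lemma parseval_Vf: "x \<in> carrier_vec p \<Longrightarrow> (\<Sum>l<p. (col Vf l \<bullet> x)^2) = x \<bullet> x"
  using sum_coord_sq[OF Vf] parseval[OF Vf oF] by simp

lemma Q_quad: "x \<in> carrier_vec p \<Longrightarrow> x \<bullet> (Q *\<^sub>v x) = (\<Sum>l<p. (s l)^2 * (col Vf l \<bullet> x)^2)"
  unfolding Qdef by (rule sandwich_quad[OF Vf])

lemma Q_quad_lower:
  assumes x: "x \<in> carrier_vec p"
  shows "x \<bullet> (Q *\<^sub>v x) \<ge> (S *\<^sub>v x) \<bullet> (S *\<^sub>v x) - tau * (x \<bullet> x)"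
proof -
  have "x \<bullet> (D *\<^sub>v x) = x \<bullet> (G *\<^sub>v x) - x \<bullet> (Q *\<^sub>v x)" by (rule quad_minus[OF G_car Q_car x])
  moreover have "x \<bullet> (G *\<^sub>v x) = (S *\<^sub>v x) \<bullet> (S *\<^sub>v x)" by (rule gram_quad1[OF S x])
  moreover have "\<bar>x \<bullet> (D *\<^sub>v x)\<bar> \<le> tau * (x \<bullet> x)" by (rule D_quad[OF x])
  ultimately show ?thesis by linarith
qed

lemma s_sq_dec: "a \<le> c \<Longrightarrow> c < p \<Longrightarrow> (s c)^2 \<le> (s a)^2"
  using s_dec s_nonneg by (intro power_mono) auto

lemma sum_s_lower:
  "(\<Sum>a<k. (sA a)^2) - real k * (3 * tau + tau * beta) \<le> (1 + beta) * (\<Sum>l<k. (s l)^2)"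
proof -
  define e where "e = (\<lambda>a. unit_vec k a :: real vec)"
  define x where "x = (\<lambda>a. xv (e a))"
  define c where "c = (\<lambda>l. zv (col Vf l) \<bullet> zv (col Vf l))"
  have ecar: "\<And>a. e a \<in> carrier_vec k" unfolding e_def by simp
  have ee: "\<And>a. a < k \<Longrightarrow> e a \<bullet> e a = 1" unfolding e_def by simp
  have fx: "\<And>l a. a < k \<Longrightarrow> col Vf l \<bullet> x a = zv (col Vf l) $ a"
    unfolding x_def using K1[OF ecar col_Vf_car] unfolding e_def by simp
  have c_eq: "\<And>l. c l = (\<Sum>a<k. (col Vf l \<bullet> x a)^2)"
    unfolding c_def sp_self_sum using fx by (auto intro!: sum.cong)
  have xx: "x a \<bullet> x a \<le> 1 + beta" if "a < k" for a
    using xv_norm[OF ecar, of a] ee[OF that] unfolding x_def by simp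
  have csum: "(\<Sum>l<p. c l) \<le> real k * (1 + beta)"
  proof -
    have "(\<Sum>l<p. c l) = (\<Sum>a<k. \<Sum>l<p. (col Vf l \<bullet> x a)^2)"
      unfolding c_eq by (rule sum.swap)
    also have "\<dots> = (\<Sum>a<k. x a \<bullet> x a)" unfolding x_def by (simp add: parseval_Vf)
    also have "\<dots> \<le> (\<Sum>a<k. 1 + beta)" using xx by (intro sum_mono) auto
    finally show ?thesis by simp
  qed
  have cb: "\<forall>l<p. 0 \<le> c l \<and> c l \<le> 1 + beta"
    unfolding c_def using c_bound[OF col_Vf_car] orth_col_norm[OF Vf oF] sp_self_ge0 by auto
  have kf: "(\<Sum>l<p. (s l)^2 * c l) \<le> (1 + beta) * (\<Sum>l<k. (s l)^2)"
    using kf_weights[OF kp k1, of "\<lambda>l. (s l)^2" c "1 + beta"] s_sq_dec cb csum by auto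
  have qsum: "(\<Sum>a<k. x a \<bullet> (Q *\<^sub>v x a)) = (\<Sum>l<p. (s l)^2 * c l)"
  proof -
    have "(\<Sum>a<k. x a \<bullet> (Q *\<^sub>v x a)) = (\<Sum>a<k. \<Sum>l<p. (s l)^2 * (col Vf l \<bullet> x a)^2)"
      unfolding x_def by (simp add: Q_quad)
    also have "\<dots> = (\<Sum>l<p. \<Sum>a<k. (s l)^2 * (col Vf l \<bullet> x a)^2)" by (rule sum.swap)
    also have "\<dots> = (\<Sum>l<p. (s l)^2 * c l)" unfolding c_eq by (simp add: sum_distrib_left)
    finally show ?thesis .
  qed
  have each: "\<And>a. a < k \<Longrightarrow> (sA a)^2 - 3 * tau - tau * beta \<le> x a \<bullet> (Q *\<^sub>v x a)"
  proof -
    fix a assume a: "a < k"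
    have ar: "a < r" using a kr by simp
    have sa: "sA a > 0" using sA_pos ar by simp
    define w where "w = wv (e a)"
    have w: "w \<in> carrier_vec m" unfolding w_def by simp
    have Mw_eq: "M *\<^sub>v w = (sA a)^2 \<cdot>\<^sub>v w"
    proof -
      have "vec r (\<lambda>a'. if a' < k then sA a' * e a $ a' else 0) = (sA a)^2 \<cdot>\<^sub>v cy (e a)"
        unfolding e_def cy_def using a sa by (intro eq_vecI) (auto simp: power2_eq_square)
      hence "M *\<^sub>v w = UA *\<^sub>v ((sA a)^2 \<cdot>\<^sub>v cy (e a))" unfolding w_def using Mw[OF ecar] by simp
      also have "\<dots> = (sA a)^2 \<cdot>\<^sub>v w" unfolding w_def wv_def using mult_mat_vec[OF UA cy_car] by simp
      finally show ?thesis .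
    qed
    have Ew: "E *\<^sub>v w \<in> carrier_vec m" using E_car w by simp
    have MwMw: "(M *\<^sub>v w) \<bullet> (M *\<^sub>v w) = (sA a)^2"
      unfolding w_def MwMw(1)[OF ecar] unfolding e_def using unit_sum[OF a] .
    have ww: "w \<bullet> w = 1 / (sA a)^2"
      unfolding w_def wv_norm(1)[OF ecar] unfolding e_def using unit_sum_div[OF a] .
    have "\<bar>w \<bullet> (E *\<^sub>v w)\<bar> \<le> tau * (w \<bullet> w)" by (rule E_quad[OF w])
    hence wEw: "\<bar>(sA a)^2 * (w \<bullet> (E *\<^sub>v w))\<bar> \<le> tau"
      using ww sa by (simp add: abs_mult field_simps)
    have MwEw: "(M *\<^sub>v w) \<bullet> (E *\<^sub>v w) = (sA a)^2 * (w \<bullet> (E *\<^sub>v w))"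
      unfolding Mw_eq using w Ew by simp
    have "(S *\<^sub>v x a) \<bullet> (S *\<^sub>v x a) = (M *\<^sub>v w - E *\<^sub>v w) \<bullet> (M *\<^sub>v w - E *\<^sub>v w)"
      unfolding x_def w_def Sxv[OF ecar] ..
    also have "\<dots> = (M *\<^sub>v w) \<bullet> (M *\<^sub>v w) - 2 * ((M *\<^sub>v w) \<bullet> (E *\<^sub>v w)) + (E *\<^sub>v w) \<bullet> (E *\<^sub>v w)"
      using M_car w Ew by (intro sq_minus[of _ m]) auto
    finally have "(S *\<^sub>v x a) \<bullet> (S *\<^sub>v x a) \<ge> (sA a)^2 - 2 * tau"
      using MwMw MwEw wEw sp_self_ge0[of "E *\<^sub>v w"] by (simp add: abs_le_iff)
    moreover have "x a \<bullet> (Q *\<^sub>v x a) \<ge> (S *\<^sub>v x a) \<bullet> (S *\<^sub>v x a) - tau * (x a \<bullet> x a)"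
      unfolding x_def by (rule Q_quad_lower) simp
    moreover have "tau * (x a \<bullet> x a) \<le> tau * (1 + beta)" using xx[OF a] tau by (intro mult_left_mono) auto
    ultimately show "(sA a)^2 - 3 * tau - tau * beta \<le> x a \<bullet> (Q *\<^sub>v x a)" by (simp add: algebra_simps)
  qed
  have "(\<Sum>a<k. (sA a)^2) - real k * (3 * tau + tau * beta) = (\<Sum>a<k. (sA a)^2 - 3 * tau - tau * beta)"
    by (simp add: sum_subtractf algebra_simps)
  also have "\<dots> \<le> (\<Sum>a<k. x a \<bullet> (Q *\<^sub>v x a))" using each by (intro sum_mono) auto
  finally show ?thesis using qsum kf by simp
qed

lemma s_lower: "b * (1 - 3 * beta - beta^2) \<le> (s (k-1))^2 * (1 + beta)"
proof -
  obtain y where y: "y \<in> carrier_vec k" "y \<noteq> 0\<^sub>v k" and yz: "\<forall>l<k-1. zv (col Vf l) \<bullet> y = 0"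
    using kernel_exists[OF k1, of "\<lambda>l. zv (col Vf l)"] by auto
  define x where "x = xv y"
  define w where "w = wv y"
  have x: "x \<in> carrier_vec p" unfolding x_def by simp
  have w: "w \<in> carrier_vec m" unfolding w_def by simp
  have Ew: "E *\<^sub>v w \<in> carrier_vec m" using E_car w by simp
  have Mwc: "M *\<^sub>v w \<in> carrier_vec m" using M_car w by simp
  have yy: "y \<bullet> y > 0" by (rule vec_pos[OF y])
  have fx0: "\<And>l. l < k - 1 \<Longrightarrow> col Vf l \<bullet> x = 0" unfolding x_def using K1[OF y(1) col_Vf_car] yz by simp
  have xx: "x \<bullet> x \<le> (1 + beta) * (y \<bullet> y)" unfolding x_def by (rule xv_norm[OF y(1)])
  have up: "x \<bullet> (Q *\<^sub>v x) \<le> (s (k-1))^2 * (x \<bullet> x)"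
  proof -
    have "x \<bullet> (Q *\<^sub>v x) = (\<Sum>l<p. (s l)^2 * (col Vf l \<bullet> x)^2)" by (rule Q_quad[OF x])
    also have "\<dots> \<le> (\<Sum>l<p. (s (k-1))^2 * (col Vf l \<bullet> x)^2)"
    proof (intro sum_mono)
      fix l assume l: "l \<in> {..<p}"
      show "(s l)^2 * (col Vf l \<bullet> x)^2 \<le> (s (k-1))^2 * (col Vf l \<bullet> x)^2"
      proof (cases "l < k - 1")
        case True thus ?thesis using fx0 by simp
      next
        case False thus ?thesis using l s_sq_dec[of "k-1" l] by (intro mult_right_mono) auto
      qed
    qed
    also have "\<dots> = (s (k-1))^2 * (x \<bullet> x)" using parseval_Vf[OF x] by (simp add: sum_distrib_left[symmetric])
    finally show ?thesis .
  qed
  have Nw: "(M *\<^sub>v w - E *\<^sub>v w) \<bullet> (M *\<^sub>v w - E *\<^sub>v w) \<ge> (1 - 2 * beta) * b * (y \<bullet> y)"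
  proof -
    have "(M *\<^sub>v w - E *\<^sub>v w) \<bullet> (M *\<^sub>v w - E *\<^sub>v w) = (M *\<^sub>v w) \<bullet> (M *\<^sub>v w) - 2 * ((M *\<^sub>v w) \<bullet> (E *\<^sub>v w)) + (E *\<^sub>v w) \<bullet> (E *\<^sub>v w)"
      by (rule sq_minus[OF Mwc Ew])
    moreover have "2 * \<bar>(M *\<^sub>v w) \<bullet> (E *\<^sub>v w)\<bar> \<le> beta * ((M *\<^sub>v w) \<bullet> (M *\<^sub>v w)) + ((E *\<^sub>v w) \<bullet> (E *\<^sub>v w)) / beta"
      by (rule amgm_vec[OF Mwc Ew beta_pos])
    moreover have "(E *\<^sub>v w) \<bullet> (E *\<^sub>v w) / beta \<le> beta * b * (y \<bullet> y)"
    proof -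
      have "(E *\<^sub>v w) \<bullet> (E *\<^sub>v w) \<le> tau^2 * (w \<bullet> w)" by (rule E_norm[OF w])
      also have "\<dots> \<le> tau^2 * ((y \<bullet> y) / b)" unfolding w_def using wv_norm(2)[OF y(1)] by (intro mult_left_mono) auto
      also have "\<dots> = beta * (beta * b * (y \<bullet> y))" using b unfolding beta_def by (simp add: power2_eq_square field_simps)
      finally show ?thesis using beta_pos by (simp add: field_simps)
    qed
    moreover have "(M *\<^sub>v w) \<bullet> (M *\<^sub>v w) \<ge> b * (y \<bullet> y)" unfolding w_def by (rule MwMw(2)[OF y(1)])
    moreover have "1 - beta \<ge> 0" using beta_small by simp
    ultimately have "(M *\<^sub>v w - E *\<^sub>v w) \<bullet> (M *\<^sub>v w - E *\<^sub>v w) \<ge> (1 - beta) * ((M *\<^sub>v w) \<bullet> (M *\<^sub>v w)) - beta * b * (y \<bullet> y)"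
      using sp_self_ge0[of "E *\<^sub>v w"] by (simp add: abs_le_iff algebra_simps)
    moreover have "(1 - beta) * ((M *\<^sub>v w) \<bullet> (M *\<^sub>v w)) \<ge> (1 - beta) * (b * (y \<bullet> y))"
      using \<open>(M *\<^sub>v w) \<bullet> (M *\<^sub>v w) \<ge> b * (y \<bullet> y)\<close> \<open>1 - beta \<ge> 0\<close> by (intro mult_left_mono) auto
    ultimately show ?thesis by (simp add: algebra_simps)
  qed
  have low: "x \<bullet> (Q *\<^sub>v x) \<ge> (1 - 2 * beta) * b * (y \<bullet> y) - tau * (1 + beta) * (y \<bullet> y)"
  proof -
    have "x \<bullet> (Q *\<^sub>v x) \<ge> (S *\<^sub>v x) \<bullet> (S *\<^sub>v x) - tau * (x \<bullet> x)" by (rule Q_quad_lower[OF x])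
    moreover have "S *\<^sub>v x = M *\<^sub>v w - E *\<^sub>v w" unfolding x_def w_def by (rule Sxv[OF y(1)])
    moreover have "tau * (x \<bullet> x) \<le> tau * ((1 + beta) * (y \<bullet> y))" using xx tau by (intro mult_left_mono) auto
    ultimately show ?thesis using Nw by (simp add: algebra_simps)
  qed
  have "(s (k-1))^2 * (x \<bullet> x) \<le> (s (k-1))^2 * ((1 + beta) * (y \<bullet> y))" using xx by (intro mult_left_mono) auto
  with up low have "(1 - 2 * beta) * b * (y \<bullet> y) - tau * (1 + beta) * (y \<bullet> y) \<le> (s (k-1))^2 * (1 + beta) * (y \<bullet> y)"
    by (simp add: algebra_simps)
  hence "((1 - 2 * beta) * b - tau * (1 + beta)) * (y \<bullet> y) \<le> ((s (k-1))^2 * (1 + beta)) * (y \<bullet> y)"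
    by (simp add: algebra_simps)
  hence "(1 - 2 * beta) * b - tau * (1 + beta) \<le> (s (k-1))^2 * (1 + beta)"
    using yy by (simp add: mult_le_cancel_right)
  moreover have "(1 - 2 * beta) * b - tau * (1 + beta) = b * (1 - 3 * beta - beta^2)"
    using btau[symmetric] by (simp add: power2_eq_square algebra_simps)
  ultimately show ?thesis by simp
qed

end


context core begin

definition "Vk = mat p k (\<lambda>(a,c). Vf $$ (a,c))"
definition "Uh = S * Vk * mat_diag k (\<lambda>l. 1 / s l)"
abbreviation "sk \<equiv> s (k - 1)"
definition "eta = tau / (sk)^2"

lemma sk_pos: "sk > 0"
proof -
  have "b * (1 - 3 * beta - beta^2) > 0"
  proof -
    have "beta^2 \<le> beta" using beta_small beta_pos by (simp add: power2_eq_square mult_le_cancel_left1)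
    hence "1 - 3 * beta - beta^2 > 0" using beta_small by linarith
    thus ?thesis using b by simp
  qed
  hence "(sk)^2 * (1 + beta) > 0" using s_lower by linarith
  hence "(sk)^2 > 0" using beta_pos by (simp add: zero_less_mult_iff)
  moreover have "sk \<ge> 0" using s_nonneg k1 kp by simp
  ultimately show ?thesis by (simp add: less_le)
qed

lemma s_pos1: "l < k \<Longrightarrow> s l \<ge> sk"
proof -
  assume l: "l < k"
  hence "l \<le> k - 1" "k - 1 < p" using k1 kp by auto
  thus ?thesis using s_dec by blast
qed

lemma s_pos: "l < k \<Longrightarrow> s l \<ge> sk" "l < k \<Longrightarrow> s l > 0"
  using s_pos1 sk_pos by (auto intro: less_le_trans)

lemma eta_pos: "eta > 0" unfolding eta_def using tau sk_pos by simp

definition "oc y = vec p (\<lambda>l. if l < k then y $ l / s l else 0)"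
definition "gv y = Vf *\<^sub>v oc y"

lemma oc_car[simp]: "oc y \<in> carrier_vec p" unfolding oc_def by simp
lemma gv_car[simp]: "gv y \<in> carrier_vec p" unfolding gv_def using Vf by simp

lemma Vk_car: "Vk \<in> carrier_mat p k" unfolding Vk_def by simp
lemma Uh_car: "Uh \<in> carrier_mat m k" unfolding Uh_def
  by (rule mult_carrier_mat[OF mult_carrier_mat[OF S Vk_car] mat_diag_dim])

lemma Vk_apply:
  assumes c: "c \<in> carrier_vec k"
  shows "Vk *\<^sub>v c = Vf *\<^sub>v vec p (\<lambda>l. if l < k then c $ l else 0)"
proof (rule eq_vecI)
  fix i assume "i < dim_vec (Vf *\<^sub>v vec p (\<lambda>l. if l < k then c $ l else 0))"
  hence i: "i < p" using Vf by simp
  have "row Vk i \<bullet> c = (\<Sum>j<k. Vf $$ (i,j) * c $ j)"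
    using i c kp Vf unfolding Vk_def by (auto simp: scalar_prod_def atLeast0LessThan intro!: sum.cong)
  moreover have "row Vf i \<bullet> vec p (\<lambda>l. if l < k then c $ l else 0) = (\<Sum>j<p. if j < k then Vf $$ (i,j) * c $ j else 0)"
    using i Vf by (auto simp: scalar_prod_def atLeast0LessThan intro!: sum.cong)
  moreover have "\<dots> = (\<Sum>j<k. Vf $$ (i,j) * c $ j)" using kp by (rule sum_if_lt)
  moreover have "(Vk *\<^sub>v c) $ i = row Vk i \<bullet> c" using i Vk_car by simp
  moreover have "(Vf *\<^sub>v vec p (\<lambda>l. if l < k then c $ l else 0)) $ i = row Vf i \<bullet> vec p (\<lambda>l. if l < k then c $ l else 0)"
    using i Vf by simp
  ultimately show "(Vk *\<^sub>v c) $ i = (Vf *\<^sub>v vec p (\<lambda>l. if l < k then c $ l else 0)) $ i"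
    by linarith
qed (use Vf Vk_car in simp)

lemma Uh_apply:
  assumes y: "y \<in> carrier_vec k"
  shows "Uh *\<^sub>v y = S *\<^sub>v gv y"
proof -
  let ?Dg = "mat_diag k (\<lambda>l. 1 / s l)"
  have SV: "S * Vk \<in> carrier_mat m k" using S Vk_car by (rule mult_carrier_mat)
  have "Uh *\<^sub>v y = (S * Vk) *\<^sub>v (?Dg *\<^sub>v y)"
    unfolding Uh_def using SV y by (intro assoc_mult_mat_vec[of _ m k _ k]) auto
  also have "\<dots> = S *\<^sub>v (Vk *\<^sub>v (?Dg *\<^sub>v y))"
    by (rule assoc_mult_mat_vec[OF S Vk_car mult_mat_vec_carrier[OF mat_diag_dim y]])
  also have "?Dg *\<^sub>v y = vec k (\<lambda>l. 1 / s l * y $ l)" using y by (rule diag_mult_vec)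
  also have "Vk *\<^sub>v vec k (\<lambda>l. 1 / s l * y $ l) = Vf *\<^sub>v vec p (\<lambda>l. if l < k then vec k (\<lambda>l. 1 / s l * y $ l) $ l else 0)"
    by (rule Vk_apply) simp
  also have "vec p (\<lambda>l. if l < k then vec k (\<lambda>l. 1 / s l * y $ l) $ l else 0) = oc y"
    unfolding oc_def by (intro eq_vecI) auto
  finally show ?thesis unfolding gv_def .
qed

lemma gv_norm:
  assumes y: "y \<in> carrier_vec k"
  shows "gv y \<bullet> gv y = (\<Sum>l<k. (y $ l)^2 / (s l)^2)" "gv y \<bullet> gv y \<le> (y \<bullet> y) / (sk)^2"
proof -
  have "gv y \<bullet> gv y = oc y \<bullet> oc y" unfolding gv_def by (rule orth_sp[OF Vf oF]) auto
  also have "\<dots> = (\<Sum>l<p. if l < k then (y $ l)^2 / (s l)^2 else 0)"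
    unfolding sp_self_sum oc_def by (auto intro!: sum.cong simp: power_divide)
  also have "\<dots> = (\<Sum>l<k. (y $ l)^2 / (s l)^2)" using kp by (rule sum_if_lt)
  finally show 1: "gv y \<bullet> gv y = (\<Sum>l<k. (y $ l)^2 / (s l)^2)" .
  have "(\<Sum>l<k. (y $ l)^2 / (s l)^2) \<le> (\<Sum>l<k. (y $ l)^2 / (sk)^2)"
  proof (intro sum_mono)
    fix l assume "l \<in> {..<k}"
    hence "sk \<le> s l" using s_pos by auto
    hence "(sk)^2 \<le> (s l)^2" using sk_pos by (intro power_mono) auto
    moreover have "0 < (s l)^2 * (sk)^2" using sk_pos \<open>sk \<le> s l\<close> by simp
    ultimately show "(y $ l)^2 / (s l)^2 \<le> (y $ l)^2 / (sk)^2" by (intro divide_left_mono) auto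
  qed
  also have "\<dots> = (y \<bullet> y) / (sk)^2" using y by (simp add: sp_self_sum sum_divide_distrib)
  finally show "gv y \<bullet> gv y \<le> (y \<bullet> y) / (sk)^2" using 1 by simp
qed

lemma gQg:
  assumes y: "y \<in> carrier_vec k"
  shows "gv y \<bullet> (Q *\<^sub>v gv y) = y \<bullet> y"
proof -
  have "gv y \<bullet> (Q *\<^sub>v gv y) = (\<Sum>l<p. (s l)^2 * (oc y $ l)^2)"
    unfolding Qdef gv_def by (rule sandwich_orth_quad[OF Vf oF]) simp
  also have "\<dots> = (\<Sum>l<p. if l < k then (y $ l)^2 else 0)"
    unfolding oc_def apply (intro sum.cong refl)
    subgoal for l using s_pos(2)[of l] by (auto simp: power_divide)
    done
  also have "\<dots> = y \<bullet> y" using kp y by (simp add: sum_if_lt sp_self_sum)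
  finally show ?thesis .
qed

lemma Uh_norm:
  assumes y: "y \<in> carrier_vec k"
  shows "(Uh *\<^sub>v y) \<bullet> (Uh *\<^sub>v y) \<le> (1 + eta) * (y \<bullet> y)"
proof -
  let ?g = "gv y"
  have "(Uh *\<^sub>v y) \<bullet> (Uh *\<^sub>v y) = ?g \<bullet> (G *\<^sub>v ?g)"
    unfolding Uh_apply[OF y] using gram_quad1[OF S gv_car] by simp
  also have "\<dots> = ?g \<bullet> (Q *\<^sub>v ?g) + ?g \<bullet> (D *\<^sub>v ?g)"
    using quad_minus[OF G_car Q_car gv_car] by simp
  also have "\<dots> \<le> y \<bullet> y + tau * (?g \<bullet> ?g)" using gQg[OF y] D_quad[OF gv_car, of y] by (simp add: abs_le_iff)
  also have "tau * (?g \<bullet> ?g) \<le> tau * ((y \<bullet> y) / (sk)^2)"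
    using gv_norm(2)[OF y] tau by (intro mult_left_mono) auto
  also have "\<dots> = eta * (y \<bullet> y)" unfolding eta_def by simp
  finally show ?thesis by (simp add: algebra_simps)
qed

definition "hv l = col Uh l"

lemma hv_eq: "l < k \<Longrightarrow> hv l = Uh *\<^sub>v unit_vec k l"
  unfolding hv_def by (rule col_as_mult[OF Uh_car])

lemma hv_car[simp]: "hv l \<in> carrier_vec m" unfolding hv_def using Uh_car by auto

lemma hv_sq: "l < k \<Longrightarrow> hv l \<bullet> hv l \<le> 1 + eta"
  using Uh_norm[of "unit_vec k l"] hv_eq by simp

lemma ST_h: 
  assumes l: "l < k"
  shows "(transpose_mat S *\<^sub>v hv l) \<bullet> (transpose_mat S *\<^sub>v hv l) \<ge> (s l)^2 - 2 * tau"
proof -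
  define e where "e = (unit_vec k l :: real vec)"
  define g where "g = gv e"
  have e: "e \<in> carrier_vec k" unfolding e_def by simp
  have g: "g \<in> carrier_vec p" unfolding g_def by simp
  have sl: "s l > 0" using s_pos l by simp
  have lp: "l < p" using l kp by simp
  have STh: "transpose_mat S *\<^sub>v hv l = Q *\<^sub>v g + D *\<^sub>v g"
  proof -
    have "hv l = S *\<^sub>v g" unfolding hv_eq[OF l] g_def e_def by (rule Uh_apply) simp
    hence "transpose_mat S *\<^sub>v hv l = transpose_mat S *\<^sub>v (S *\<^sub>v g)" by simp
    also have "\<dots> = G *\<^sub>v g" by (rule gram_apply1[OF S g])
    finally have "transpose_mat S *\<^sub>v hv l = G *\<^sub>v g" .
    also have "\<dots> = Q *\<^sub>v g + D *\<^sub>v g" by (rule mat_split_plus[OF G_car Q_car g])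
    finally show ?thesis .
  qed
  have Qg: "Q *\<^sub>v g = (s l)^2 \<cdot>\<^sub>v g"
  proof -
    have "Q *\<^sub>v g = Vf *\<^sub>v vec p (\<lambda>a. (s a)^2 * oc e $ a)"
      unfolding Qdef g_def gv_def by (rule sandwich_apply_orth[OF Vf oF]) simp
    also have "vec p (\<lambda>a. (s a)^2 * oc e $ a) = (s l)^2 \<cdot>\<^sub>v oc e"
      unfolding oc_def e_def using l lp by (intro eq_vecI) auto
    also have "Vf *\<^sub>v ((s l)^2 \<cdot>\<^sub>v oc e) = (s l)^2 \<cdot>\<^sub>v g"
      unfolding g_def gv_def using mult_mat_vec[OF Vf oc_car] by simp
    finally show ?thesis .
  qed
  have gg: "g \<bullet> g = 1 / (s l)^2"
    unfolding g_def gv_norm(1)[OF e] unfolding e_def using unit_sum_div[OF l] .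
  have Dg: "D *\<^sub>v g \<in> carrier_vec p" using D_car g by simp
  have Qgc: "Q *\<^sub>v g \<in> carrier_vec p" using Q_car g by simp
  have "(transpose_mat S *\<^sub>v hv l) \<bullet> (transpose_mat S *\<^sub>v hv l)
      = (Q *\<^sub>v g) \<bullet> (Q *\<^sub>v g) + 2 * ((Q *\<^sub>v g) \<bullet> (D *\<^sub>v g)) + (D *\<^sub>v g) \<bullet> (D *\<^sub>v g)"
    unfolding STh by (rule sq_plus[OF Qgc Dg])
  moreover have "(Q *\<^sub>v g) \<bullet> (Q *\<^sub>v g) = (s l)^2"
    unfolding Qg using g gg sl by (simp add: power2_eq_square field_simps)
  moreover have "(Q *\<^sub>v g) \<bullet> (D *\<^sub>v g) = (s l)^2 * (g \<bullet> (D *\<^sub>v g))"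
    unfolding Qg using g Dg by simp
  moreover have "\<bar>(s l)^2 * (g \<bullet> (D *\<^sub>v g))\<bar> \<le> tau"
  proof -
    have "\<bar>g \<bullet> (D *\<^sub>v g)\<bar> \<le> tau * (g \<bullet> g)" by (rule D_quad[OF g])
    thus ?thesis using gg sl by (simp add: abs_mult field_simps)
  qed
  ultimately show ?thesis using sp_self_ge0[of "D *\<^sub>v g"] by (simp add: abs_le_iff)
qed

lemma hMh:
  assumes l: "l < k"
  shows "hv l \<bullet> (M *\<^sub>v hv l) \<ge> (s l)^2 - 2 * tau - tau * (1 + eta)"
proof -
  have "hv l \<bullet> (E *\<^sub>v hv l) = hv l \<bullet> (M *\<^sub>v hv l) - hv l \<bullet> (N *\<^sub>v hv l)"
    by (rule quad_minus[OF M_car N_car hv_car])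
  moreover have "hv l \<bullet> (N *\<^sub>v hv l) = (transpose_mat S *\<^sub>v hv l) \<bullet> (transpose_mat S *\<^sub>v hv l)"
    by (rule gram_quad2[OF S hv_car])
  moreover have "\<bar>hv l \<bullet> (E *\<^sub>v hv l)\<bar> \<le> tau * (hv l \<bullet> hv l)" by (rule E_quad[OF hv_car])
  moreover have "tau * (hv l \<bullet> hv l) \<le> tau * (1 + eta)" using hv_sq[OF l] tau by (intro mult_left_mono) auto
  ultimately show ?thesis using ST_h[OF l] by (simp add: abs_le_iff)
qed

lemma T_lower: "(\<Sum>l<k. hv l \<bullet> (M *\<^sub>v hv l)) \<ge> (\<Sum>l<k. (s l)^2) - 2 * real k * tau - real k * tau * (1 + eta)"
proof -
  have "(\<Sum>l<k. (s l)^2 - 2 * tau - tau * (1 + eta)) \<le> (\<Sum>l<k. hv l \<bullet> (M *\<^sub>v hv l))"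
    using hMh by (intro sum_mono) auto
  thus ?thesis by (simp add: sum_subtractf algebra_simps)
qed

end


lemma final_arith:
  fixes Sa Ss T F L bt et tau b skq kk om :: real
  assumes kk: "kk \<ge> 1" and b: "b > 0" and tau: "tau > 0" and bt: "bt = tau / b"
    and bts: "bt * 1372 \<le> 1" and om: "om > 0" and btom: "bt * (4 * kk + 3 + 2 * om) \<le> om"
    and kb: "kk * b \<le> Sa" and SaF: "Sa \<le> F"
    and h1: "Sa - kk * (3 * tau + tau * bt) \<le> (1 + bt) * Ss"
    and h2: "Ss - 2 * kk * tau - kk * tau * (1 + et) \<le> T"
    and h3: "L \<le> F - (1 - et) * T" and h4: "T \<le> (1 + et) * F" and h5: "0 \<le> T"
    and h6: "b * (1 - 3 * bt - bt^2) \<le> skq * (1 + bt)" and et: "et = tau / skq" and skq: "skq > 0"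
  shows "L < F - Sa + 5 * om * F"
proof -
  have btp: "bt > 0" using bt tau b by simp
  have tb: "tau = bt * b" using bt b by simp
  have s1: "99 * b \<le> 100 * skq"
  proof -
    have "bt^2 \<le> bt" using bts btp by (simp add: power2_eq_square mult_le_cancel_left1)
    moreover have "99 * (1 + bt) \<le> 100 * (1 - 3 * bt - bt^2) \<longleftrightarrow> 399 * bt + 100 * bt^2 \<le> 1"
      by (simp add: algebra_simps)
    ultimately have "99 * (1 + bt) \<le> 100 * (1 - 3 * bt - bt^2)" using bts btp by linarith
    hence "b * (99 * (1 + bt)) \<le> b * (100 * (1 - 3 * bt - bt^2))" using b by (intro mult_left_mono) auto
    also have "\<dots> \<le> 100 * (skq * (1 + bt))" using h6 by linarith
    finally have "(99 * b) * (1 + bt) \<le> (100 * skq) * (1 + bt)" by (simp add: algebra_simps)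
    thus ?thesis using btp by (simp add: mult_le_cancel_right)
  qed
  have etp: "et > 0" using et tau skq by simp
  have s2: "99 * et \<le> 100 * bt"
  proof -
    have "et * skq = tau" using et skq by simp
    hence "99 * et * b \<le> 100 * et * skq" using s1 etp by (simp add: mult_left_mono)
    hence "99 * et * b \<le> 100 * bt * b" using \<open>et * skq = tau\<close> tb by (simp add: algebra_simps)
    thus ?thesis using b by (simp add: mult_le_cancel_right)
  qed
  have Sa0: "Sa \<ge> 0" using kb kk b by (smt (verit) mult_nonneg_nonneg)
  have F0: "F > 0" using kb kk b SaF by (smt (verit) mult_pos_pos)
  have s3: "kk * tau \<le> bt * F"
  proof -
    have "kk * tau = bt * (kk * b)" using tb by simp
    also have "\<dots> \<le> bt * F" using kb SaF btp by (intro mult_left_mono) auto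
    finally show ?thesis .
  qed
  define X where "X = kk * tau * (3 + bt)"
  have X0: "X \<ge> 0" unfolding X_def using kk tau btp by simp
  have s4: "Ss \<ge> (1 - bt) * Sa - X"
  proof -
    have "(1 + bt) * ((1 - bt) * Sa - X) = (1 - bt^2) * Sa - (1 + bt) * X"
      by (simp add: power2_eq_square algebra_simps)
    also have "\<dots> \<le> Sa - X" using Sa0 X0 btp by (simp add: algebra_simps mult_nonneg_nonneg)
    also have "\<dots> \<le> (1 + bt) * Ss" using h1 unfolding X_def by (simp add: algebra_simps)
    finally show ?thesis using btp by (simp add: mult_le_cancel_left)
  qed
  have s5: "Sa - T \<le> bt * Sa + X + kk * tau * (3 + et)" using s4 h2 by (simp add: algebra_simps)
  have s6: "X + kk * tau * (3 + et) \<le> bt * F * (6 + bt + et)"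
  proof -
    have "X + kk * tau * (3 + et) = (kk * tau) * (6 + bt + et)" unfolding X_def by (simp add: algebra_simps)
    also have "\<dots> \<le> (bt * F) * (6 + bt + et)" using s3 btp etp by (intro mult_right_mono) auto
    finally show ?thesis by simp
  qed
  have s7: "L \<le> F - T + et * ((1 + et) * F)"
  proof -
    have "et * T \<le> et * ((1 + et) * F)" using h4 etp by (intro mult_left_mono) auto
    thus ?thesis using h3 by (simp add: algebra_simps)
  qed
  have et_s: "et \<le> 1" using s2 bts by linarith
  have bt_s: "bt \<le> 1" using bts by linarith
  have s8: "et * ((1 + et) * F) \<le> (102 / 100 * bt) * (2 * F)"
  proof -
    have "et \<le> 102 / 100 * bt" using s2 btp by linarith
    moreover have "(1 + et) * F \<le> 2 * F" using et_s F0 by (intro mult_right_mono) auto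
    ultimately show ?thesis using etp F0 by (intro mult_mono) auto
  qed
  have s9: "bt * Sa \<le> bt * F" using SaF btp by (intro mult_left_mono) auto
  have s10: "bt * F * (6 + bt + et) \<le> bt * F * 8" using et_s bt_s btp F0 by (intro mult_left_mono) auto
  have "L - (F - Sa) \<le> bt * F + bt * F * 8 + (102 / 100 * bt) * (2 * F)"
    using s5 s6 s7 s8 s9 s10 by linarith
  also have "\<dots> = (1104 / 100) * (bt * F)" by (simp add: algebra_simps)
  also have "\<dots> < 5 * om * F"
  proof -
    have "bt * 7 \<le> bt * (4 * kk + 3 + 2 * om)" using btp kk om by (intro mult_left_mono) auto
    hence "7 * bt \<le> om" using btom by linarith
    hence "(1104 / 100) * bt < 5 * om" using btp by linarith
    thus ?thesis using F0 by (simp add: mult_strict_right_mono mult.assoc[symmetric])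
  qed
  finally show ?thesis by linarith
qed

lemma col_minus_mat:
  fixes A C :: "real mat"
  assumes "A \<in> carrier_mat m n" "C \<in> carrier_mat m n" "j < n"
  shows "col (A - C) j = col A j - col C j"
  by (rule eq_vecI) (use assms in \<open>auto simp: carrier_matD\<close>)

lemma mat_diag_dims[simp]: "dim_row (mat_diag n f) = n" "dim_col (mat_diag n f) = n"
  by (simp_all add: mat_diag_def)

context core begin

lemma UD_entry: "i < m \<Longrightarrow> l < r \<Longrightarrow> (UA * mat_diag r sA) $$ (i,l) = UA $$ (i,l) * sA l"
proof -
  assume i: "i < m" and l: "l < r"
  have "(UA * mat_diag r sA) $$ (i,l) = row UA i \<bullet> col (mat_diag r sA) l"
    by (rule index_mult_mat(1)) (use UA i l in \<open>auto simp: mat_diag_def\<close>)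
  also have "\<dots> = (\<Sum>j\<in>{0..<r}. UA $$ (i,j) * (if j = l then sA l else 0))"
    using UA i l unfolding scalar_prod_def mat_diag_def by (intro sum.cong) auto
  also have "\<dots> = UA $$ (i,l) * sA l" using l by (simp add: if_distrib cong: if_cong)
  finally show ?thesis .
qed

lemma A_entry: "i < m \<Longrightarrow> j < n \<Longrightarrow> A $$ (i,j) = (\<Sum>l<r. sA l * UA $$ (i,l) * VA $$ (j,l))"
proof -
  assume i: "i < m" and j: "j < n"
  have UD: "UA * mat_diag r sA \<in> carrier_mat m r" using UA by simp
  have "A $$ (i,j) = row (UA * mat_diag r sA) i \<bullet> col (transpose_mat VA) j"
    unfolding svd by (rule index_mult_mat(1)) (use UD VA i j in auto)
  also have "\<dots> = (\<Sum>l\<in>{0..<r}. (UA * mat_diag r sA) $$ (i,l) * VA $$ (j,l))"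
    using UD VA i j unfolding scalar_prod_def by (intro sum.cong) auto
  also have "\<dots> = (\<Sum>l<r. sA l * UA $$ (i,l) * VA $$ (j,l))"
    using UD_entry[OF i] by (auto simp: atLeast0LessThan intro!: sum.cong)
  finally show ?thesis .
qed

lemma split_r: "(\<Sum>l<r. f l) = (\<Sum>l<k. f l) + (\<Sum>l\<in>{k..<r}. (f l :: real))"
  using kr by (metis lessThan_atLeast0 sum.atLeastLessThan_concat zero_le)

lemma F_eq: "(fro_norm A)^2 = (\<Sum>l<r. (sA l)^2)"
proof -
  have "(fro_norm A)^2 = (\<Sum>i<m. \<Sum>j<n. (\<Sum>l\<in>{..<r}. sA l * UA $$ (i,l) * VA $$ (j,l))^2)"
    unfolding fro_sq using A A_entry by (auto intro!: sum.cong)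
  also have "\<dots> = (\<Sum>l<r. (sA l)^2)" by (rule fro_rank_sum[OF UA VA oU oV]) auto
  finally show ?thesis .
qed

lemma FAk_eq:
  assumes Ak: "Ak = mat m n (\<lambda>(a,b). \<Sum>l<k. sA l * UA $$ (a,l) * VA $$ (b,l))"
  shows "(fro_norm (A - Ak))^2 = (\<Sum>l\<in>{k..<r}. (sA l)^2)"
proof -
  have "(fro_norm (A - Ak))^2 = (\<Sum>i<m. \<Sum>j<n. (\<Sum>l\<in>{k..<r}. sA l * UA $$ (i,l) * VA $$ (j,l))^2)"
    unfolding fro_sq using A Ak A_entry split_r by (auto intro!: sum.cong)
  also have "\<dots> = (\<Sum>l\<in>{k..<r}. (sA l)^2)" by (rule fro_rank_sum[OF UA VA oU oV]) auto
  finally show ?thesis .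
qed

lemma resid_car: "A - Uh * transpose_mat Uh * A \<in> carrier_mat m n"
proof -
  have UU: "Uh * transpose_mat Uh \<in> carrier_mat m m" by (rule mult_carrier_mat[OF Uh_car]) (use Uh_car in simp)
  show ?thesis by (rule minus_carrier_mat[OF mult_carrier_mat[OF UU A]])
qed

lemma col_resid:
  assumes j: "j < n"
  shows "col (A - Uh * transpose_mat Uh * A) j = col A j - Uh *\<^sub>v (transpose_mat Uh *\<^sub>v col A j)"
proof -
  have UU: "Uh * transpose_mat Uh \<in> carrier_mat m m" by (rule mult_carrier_mat[OF Uh_car]) (use Uh_car in simp)
  have Ut: "transpose_mat Uh \<in> carrier_mat k m" using Uh_car by simp
  have aj: "col A j \<in> carrier_vec m" by (rule col_carrier_vec[OF j A])
  have C: "Uh * transpose_mat Uh * A \<in> carrier_mat m n" by (rule mult_carrier_mat[OF UU A])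
  have c1: "col (Uh * transpose_mat Uh * A) j = (Uh * transpose_mat Uh) *\<^sub>v col A j"
    by (rule col_mult2[OF UU A j])
  have c2: "(Uh * transpose_mat Uh) *\<^sub>v col A j = Uh *\<^sub>v (transpose_mat Uh *\<^sub>v col A j)"
    by (rule assoc_mult_mat_vec[OF Uh_car Ut aj])
  have "col (A - Uh * transpose_mat Uh * A) j = col A j - col (Uh * transpose_mat Uh * A) j"
    by (rule col_minus_mat[OF A C j])
  thus ?thesis using c1 c2 by simp
qed

lemma core_main:
  assumes Ak: "Ak = mat m n (\<lambda>(a,b). \<Sum>l<k. sA l * UA $$ (a,l) * VA $$ (b,l))"
    and om: "0 < om" and tauom: "tau * (4 * real k + 3 + 2 * om) \<le> om * b"
  shows "(fro_norm (A - Uh * transpose_mat Uh * A))^2 < (fro_norm (A - Ak))^2 + 5 * om * (fro_norm A)^2"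
proof -
  define F where "F = (fro_norm A)^2"
  define Sa where "Sa = (\<Sum>l<k. (sA l)^2)"
  define Ss where "Ss = (\<Sum>l<k. (s l)^2)"
  define Y where "Y = (\<lambda>j. transpose_mat Uh *\<^sub>v col A j)"
  define T where "T = (\<Sum>j<n. Y j \<bullet> Y j)"
  define L where "L = (fro_norm (A - Uh * transpose_mat Uh * A))^2"
  have Ycar: "\<And>j. Y j \<in> carrier_vec k" unfolding Y_def carrier_vec_def using Uh_car by simp
  have ajc: "\<And>j. j < n \<Longrightarrow> col A j \<in> carrier_vec m" using A by simp
  have FAk: "(fro_norm (A - Ak))^2 = F - Sa"
    unfolding FAk_eq[OF Ak] F_def F_eq Sa_def using split_r[of "\<lambda>l. (sA l)^2"] by simp
  have F_cols: "F = (\<Sum>j<n. col A j \<bullet> col A j)" unfolding F_def by (rule fro_cols[OF A])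
  have kb: "real k * b \<le> Sa"
  proof -
    have "(\<Sum>l<k. b) \<le> Sa" unfolding Sa_def using b_le kr by (intro sum_mono) auto
    thus ?thesis by simp
  qed
  have SaF: "Sa \<le> F"
    unfolding F_def F_eq Sa_def using split_r[of "\<lambda>l. (sA l)^2"] by (simp add: sum_nonneg)
  have percol: "\<And>j. j < n \<Longrightarrow> col (A - Uh * transpose_mat Uh * A) j \<bullet> col (A - Uh * transpose_mat Uh * A) j
      \<le> col A j \<bullet> col A j - (1 - eta) * (Y j \<bullet> Y j)"
  proof -
    fix j assume j: "j < n"
    have aj: "col A j \<in> carrier_vec m" using ajc[OF j] .
    have UY: "Uh *\<^sub>v Y j \<in> carrier_vec m" using Uh_car Ycar by simp
    have "col (A - Uh * transpose_mat Uh * A) j \<bullet> col (A - Uh * transpose_mat Uh * A) j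
       = col A j \<bullet> col A j - 2 * (col A j \<bullet> (Uh *\<^sub>v Y j)) + (Uh *\<^sub>v Y j) \<bullet> (Uh *\<^sub>v Y j)"
      unfolding col_resid[OF j] using sq_minus[OF aj UY] by (simp add: Y_def)
    moreover have "col A j \<bullet> (Uh *\<^sub>v Y j) = Y j \<bullet> Y j"
      unfolding Y_def using Uh_car aj by (intro sp_transpose[of _ m k]) auto
    moreover have "(Uh *\<^sub>v Y j) \<bullet> (Uh *\<^sub>v Y j) \<le> (1 + eta) * (Y j \<bullet> Y j)" by (rule Uh_norm[OF Ycar])
    ultimately show "col (A - Uh * transpose_mat Uh * A) j \<bullet> col (A - Uh * transpose_mat Uh * A) j
      \<le> col A j \<bullet> col A j - (1 - eta) * (Y j \<bullet> Y j)" by (simp add: algebra_simps)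
  qed
  have Ybound: "\<And>j. j < n \<Longrightarrow> Y j \<bullet> Y j \<le> (1 + eta) * (col A j \<bullet> col A j)"
  proof -
    fix j assume j: "j < n"
    have aj: "col A j \<in> carrier_vec m" using ajc[OF j] .
    have UY: "Uh *\<^sub>v Y j \<in> carrier_vec m" using Uh_car Ycar by simp
    have e: "Y j \<bullet> Y j = col A j \<bullet> (Uh *\<^sub>v Y j)"
      unfolding Y_def using Uh_car aj by (intro sp_transpose[of _ m k, symmetric]) auto
    have "(Y j \<bullet> Y j)^2 \<le> (col A j \<bullet> col A j) * ((Uh *\<^sub>v Y j) \<bullet> (Uh *\<^sub>v Y j))"
      unfolding e by (rule cs_vec[OF aj UY])
    also have "\<dots> \<le> (col A j \<bullet> col A j) * ((1 + eta) * (Y j \<bullet> Y j))"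
      using Uh_norm[OF Ycar] sp_self_ge0 by (intro mult_left_mono) auto
    finally have *: "(Y j \<bullet> Y j)^2 \<le> ((1 + eta) * (col A j \<bullet> col A j)) * (Y j \<bullet> Y j)"
      by (simp add: algebra_simps)
    show "Y j \<bullet> Y j \<le> (1 + eta) * (col A j \<bullet> col A j)"
    proof (cases "Y j \<bullet> Y j = 0")
      case True thus ?thesis using eta_pos sp_self_ge0[of "col A j"] by simp
    next
      case False
      hence "Y j \<bullet> Y j > 0" using sp_self_ge0[of "Y j"] by simp
      thus ?thesis using * by (simp add: power2_eq_square)
    qed
  qed
  have h3: "L \<le> F - (1 - eta) * T"
  proof -
    have "L = (\<Sum>j<n. col (A - Uh * transpose_mat Uh * A) j \<bullet> col (A - Uh * transpose_mat Uh * A) j)"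
      unfolding L_def by (rule fro_cols[OF resid_car])
    also have "\<dots> \<le> (\<Sum>j<n. col A j \<bullet> col A j - (1 - eta) * (Y j \<bullet> Y j))"
      using percol by (intro sum_mono) auto
    also have "\<dots> = F - (1 - eta) * T" unfolding F_cols T_def by (simp add: sum_subtractf sum_distrib_left)
    finally show ?thesis .
  qed
  have h4: "T \<le> (1 + eta) * F"
  proof -
    have "T \<le> (\<Sum>j<n. (1 + eta) * (col A j \<bullet> col A j))" unfolding T_def using Ybound by (intro sum_mono) auto
    thus ?thesis unfolding F_cols by (simp add: sum_distrib_left)
  qed
  have h5: "0 \<le> T" unfolding T_def by (intro sum_nonneg) (simp add: sp_self_ge0)
  have T_eq: "T = (\<Sum>l<k. hv l \<bullet> (M *\<^sub>v hv l))"
  proof -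
    have "T = (\<Sum>j<n. \<Sum>l<k. (col Uh l \<bullet> col A j)^2)"
      unfolding T_def Y_def using sum_coord_sq[OF Uh_car ajc] by simp
    also have "\<dots> = (\<Sum>l<k. \<Sum>j<n. (col A j \<bullet> hv l)^2)"
      unfolding hv_def by (subst sum.swap) (use ajc Uh_car in \<open>auto intro!: sum.cong simp: comm_scalar_prod[of _ m]\<close>)
    also have "\<dots> = (\<Sum>l<k. (transpose_mat A *\<^sub>v hv l) \<bullet> (transpose_mat A *\<^sub>v hv l))"
      using sum_coord_sq[OF A hv_car] by simp
    also have "\<dots> = (\<Sum>l<k. hv l \<bullet> (M *\<^sub>v hv l))" using gram_quad2[OF A hv_car] by simp
    finally show ?thesis .
  qed
  have h2: "Ss - 2 * real k * tau - real k * tau * (1 + eta) \<le> T"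
    unfolding T_eq Ss_def using T_lower by simp
  have h1: "Sa - real k * (3 * tau + tau * beta) \<le> (1 + beta) * Ss"
    unfolding Sa_def Ss_def by (rule sum_s_lower)
  have btom: "beta * (4 * real k + 3 + 2 * om) \<le> om"
    using tauom b unfolding beta_def by (simp add: field_simps)
  have "L < F - Sa + 5 * om * F"
    by (rule final_arith[where kk="real k" and b=b and tau=tau and bt=beta and om=om and Sa=Sa and F=F
          and Ss=Ss and T=T and L=L and et=eta and skq="(sk)^2"])
      (use k1 b tau beta_small om btom kb SaF h1 h2 h3 h4 h5 s_lower sk_pos in
        \<open>auto simp: beta_def eta_def\<close>)
  thus ?thesis unfolding L_def FAk F_def by simp
qed

end


lemma svd_F:
  fixes A UA VA :: "real mat"
  assumes A: "A \<in> carrier_mat m n" and UA: "UA \<in> carrier_mat m r" and VA: "VA \<in> carrier_mat n r"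
    and oU: "transpose_mat UA * UA = 1\<^sub>m r" and oV: "transpose_mat VA * VA = 1\<^sub>m r"
    and svd: "A = UA * mat_diag r sA * transpose_mat VA"
  shows "(fro_norm A)^2 = (\<Sum>l<r. (sA l)^2)"
proof -
  have UD_entry: "(UA * mat_diag r sA) $$ (i,l) = UA $$ (i,l) * sA l" if i: "i < m" and l: "l < r" for i l
  proof -
    have "(UA * mat_diag r sA) $$ (i,l) = row UA i \<bullet> col (mat_diag r sA) l"
      by (rule index_mult_mat(1)) (use UA i l in \<open>auto simp: mat_diag_def\<close>)
    also have "\<dots> = (\<Sum>j\<in>{0..<r}. UA $$ (i,j) * (if j = l then sA l else 0))"
      using UA i l unfolding scalar_prod_def mat_diag_def by (intro sum.cong) auto
    also have "\<dots> = UA $$ (i,l) * sA l" using l by (simp add: if_distrib cong: if_cong)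
    finally show ?thesis .
  qed
  have A_entry: "A $$ (i,j) = (\<Sum>l<r. sA l * UA $$ (i,l) * VA $$ (j,l))" if i: "i < m" and j: "j < n" for i j
  proof -
    have UD: "UA * mat_diag r sA \<in> carrier_mat m r" using UA by simp
    have "A $$ (i,j) = row (UA * mat_diag r sA) i \<bullet> col (transpose_mat VA) j"
      unfolding svd by (rule index_mult_mat(1)) (use UD VA i j in auto)
    also have "\<dots> = (\<Sum>l\<in>{0..<r}. (UA * mat_diag r sA) $$ (i,l) * VA $$ (j,l))"
      using UD VA i j unfolding scalar_prod_def by (intro sum.cong) auto
    also have "\<dots> = (\<Sum>l<r. sA l * UA $$ (i,l) * VA $$ (j,l))"
      using UD_entry[OF i] by (auto simp: atLeast0LessThan intro!: sum.cong)
    finally show ?thesis .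
  qed
  have "(fro_norm A)^2 = (\<Sum>i<m. \<Sum>j<n. (\<Sum>l\<in>{..<r}. sA l * UA $$ (i,l) * VA $$ (j,l))^2)"
    unfolding fro_sq using A A_entry by (auto intro!: sum.cong)
  also have "\<dots> = (\<Sum>l<r. (sA l)^2)" by (rule fro_rank_sum[OF UA VA oU oV]) auto
  finally show ?thesis .
qed

lemma eig_set:
  fixes A UA VA :: "real mat"
  assumes A: "A \<in> carrier_mat m n" and UA: "UA \<in> carrier_mat m r" and VA: "VA \<in> carrier_mat n r"
    and oU: "transpose_mat UA * UA = 1\<^sub>m r" and oV: "transpose_mat VA * VA = 1\<^sub>m r"
    and svd: "A = UA * mat_diag r sA * transpose_mat VA"
    and sA_pos: "\<forall>l<r. sA l > 0"
  shows "{e. e \<noteq> 0 \<and> eigenvalue (transpose_mat A * A) e} = (\<lambda>l. (sA l)^2) ` {..<r}"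
proof -
  let ?P = "transpose_mat A * A"
  have P: "?P = VA * mat_diag r (\<lambda>i. (sA i)^2) * transpose_mat VA" by (rule svd_gram[OF UA VA oU svd])
  have Pc: "?P \<in> carrier_mat n n" using A by simp
  have app: "?P *\<^sub>v v = VA *\<^sub>v vec r (\<lambda>a. (sA a)^2 * (col VA a \<bullet> v))" if v: "v \<in> carrier_vec n" for v
    unfolding P by (rule sandwich_apply[OF VA v])
  have backv: "transpose_mat VA *\<^sub>v (VA *\<^sub>v c) = c" if c: "c \<in> carrier_vec r" for c
  proof -
    have "transpose_mat VA *\<^sub>v (VA *\<^sub>v c) = (transpose_mat VA * VA) *\<^sub>v c"
      using VA c by (intro assoc_mult_mat_vec[symmetric, of _ r n _ r]) auto
    thus ?thesis using oV c by simp
  qed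
  show ?thesis
  proof (intro equalityI subsetI)
    fix e assume "e \<in> {e. e \<noteq> 0 \<and> eigenvalue ?P e}"
    then obtain v where e0: "e \<noteq> 0" and v: "v \<in> carrier_vec n" "v \<noteq> 0\<^sub>v n" and ev: "?P *\<^sub>v v = e \<cdot>\<^sub>v v"
      unfolding eigenvalue_def eigenvector_def using Pc by auto
    define y where "y = transpose_mat VA *\<^sub>v v"
    have y: "y \<in> carrier_vec r" unfolding y_def using VA v by simp
    have yi: "\<And>a. a < r \<Longrightarrow> y $ a = col VA a \<bullet> v" unfolding y_def using VA v by simp
    have Pv: "?P *\<^sub>v v = VA *\<^sub>v vec r (\<lambda>a. (sA a)^2 * y $ a)"
    proof -
      have "vec r (\<lambda>a. (sA a)^2 * (col VA a \<bullet> v)) = vec r (\<lambda>a. (sA a)^2 * y $ a)"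
        by (intro eq_vecI) (auto simp: yi)
      thus ?thesis using app[OF v(1)] by simp
    qed
    have "transpose_mat VA *\<^sub>v (?P *\<^sub>v v) = vec r (\<lambda>a. (sA a)^2 * y $ a)"
      unfolding Pv by (rule backv) simp
    moreover have "transpose_mat VA *\<^sub>v (e \<cdot>\<^sub>v v) = e \<cdot>\<^sub>v y"
      unfolding y_def using mult_mat_vec[of "transpose_mat VA" r n v e] VA v by simp
    ultimately have vv: "vec r (\<lambda>a. (sA a)^2 * y $ a) = e \<cdot>\<^sub>v y" using ev by simp
    have eq: "(sA a)^2 * y $ a = e * y $ a" if a: "a < r" for a
    proof -
      have "vec r (\<lambda>a. (sA a)^2 * y $ a) $ a = (e \<cdot>\<^sub>v y) $ a" using vv by simp
      thus ?thesis using y a by simp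
    qed
    show "e \<in> (\<lambda>l. (sA l)^2) ` {..<r}"
    proof (cases "\<exists>a<r. y $ a \<noteq> 0")
      case True
      then obtain a where a: "a < r" "y $ a \<noteq> 0" by auto
      hence "(sA a)^2 = e" using eq[OF a(1)] by simp
      thus ?thesis using a by auto
    next
      case False
      hence "vec r (\<lambda>a. (sA a)^2 * y $ a) = 0\<^sub>v r" by (intro eq_vecI) auto
      moreover have "VA *\<^sub>v 0\<^sub>v r = 0\<^sub>v n" using VA by (intro eq_vecI) (auto simp: scalar_prod_def)
      ultimately have "?P *\<^sub>v v = 0\<^sub>v n" unfolding Pv by simp
      hence "e \<cdot>\<^sub>v v = 0\<^sub>v n" using ev by simp
      have "v = 0\<^sub>v n"
      proof (rule eq_vecI)
        fix i assume "i < dim_vec (0\<^sub>v n :: real vec)"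
        hence i: "i < n" by simp
        have "(e \<cdot>\<^sub>v v) $ i = 0" using \<open>e \<cdot>\<^sub>v v = 0\<^sub>v n\<close> i by simp
        hence "e * v $ i = 0" using v(1) i by simp
        thus "v $ i = 0\<^sub>v n $ i" using e0 i by simp
      qed (use v(1) in simp)
      thus ?thesis using v(2) by simp
    qed
  next
    fix e assume "e \<in> (\<lambda>l. (sA l)^2) ` {..<r}"
    then obtain l where l: "l < r" and e: "e = (sA l)^2" by auto
    define v where "v = col VA l"
    have v: "v \<in> carrier_vec n" unfolding v_def using VA l by simp
    have vv: "v \<bullet> v = 1" unfolding v_def by (rule orth_col_norm[OF VA oV l])
    have vnz: "v \<noteq> 0\<^sub>v n" using vv by auto
    have "vec r (\<lambda>a. (sA a)^2 * (col VA a \<bullet> v)) = (sA l)^2 \<cdot>\<^sub>v unit_vec r l"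
    proof (rule eq_vecI)
      fix a assume "a < dim_vec ((sA l)^2 \<cdot>\<^sub>v unit_vec r l)"
      hence a: "a < r" by simp
      have "col VA a \<bullet> v = (transpose_mat VA * VA) $$ (a,l)" unfolding v_def using VA a l by simp
      thus "vec r (\<lambda>a. (sA a)^2 * (col VA a \<bullet> v)) $ a = ((sA l)^2 \<cdot>\<^sub>v unit_vec r l) $ a"
        using oV a l by auto
    qed simp
    hence "?P *\<^sub>v v = VA *\<^sub>v ((sA l)^2 \<cdot>\<^sub>v unit_vec r l)" using app[OF v] by simp
    also have "\<dots> = (sA l)^2 \<cdot>\<^sub>v (VA *\<^sub>v unit_vec r l)" using mult_mat_vec[OF VA] by simp
    also have "VA *\<^sub>v unit_vec r l = v" unfolding v_def by (rule col_as_mult[OF VA l, symmetric])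
    finally have "?P *\<^sub>v v = e \<cdot>\<^sub>v v" unfolding e .
    moreover have "e \<noteq> 0" using sA_pos l e by (metis less_irrefl power_not_zero)
    ultimately show "e \<in> {e. e \<noteq> 0 \<and> eigenvalue ?P e}"
      unfolding eigenvalue_def eigenvector_def using v vnz A by auto
  qed
qed



theorem mainTheorem5:
  fixes A UA VA Vf :: "real mat" and m n r k p :: nat and sA s :: "nat \<Rightarrow> real"
    and eps delta theta \<omega> :: real and j i :: "nat \<Rightarrow> nat"
    and S W V Uhat Ak :: "real mat"
  assumes A_dim: "A \<in> carrier_mat m n" and A_nz: "A \<noteq> 0\<^sub>m m n"
    \<comment> \<open>compact SVD  A = U_A Sigma_A V_A^T  of the rank-r matrix A\<close>
    and UA_dim: "UA \<in> carrier_mat m r" and VA_dim: "VA \<in> carrier_mat n r"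
    and UA_orth: "transpose_mat UA * UA = 1\<^sub>m r"
    and VA_orth: "transpose_mat VA * VA = 1\<^sub>m r"
    and sA_pos: "\<forall>l<r. sA l > 0"
    and sA_dec: "\<forall>a b. a \<le> b \<longrightarrow> b < r \<longrightarrow> sA b \<le> sA a"
    and A_svd: "A = UA * mat_diag r sA * transpose_mat VA"
    and k_bds: "1 \<le> k" "k \<le> r"
    and eps: "0 < eps" "eps < 1" and delta: "0 < delta" "delta < 1"
    and omega_def: "\<omega> = (spec_norm A)^2 * eps^2 /
          (196 * (fro_norm A * cond_num A + spec_norm A)^2)"
    and theta: "0 < theta"
       "theta \<le> \<omega> * (spec_norm A)^2 /
          ((4 * real k + 3 + 2 * \<omega>) * (cond_num A)^2 * (fro_norm A)^2)"
    and p_def: "p = nat \<lceil>1 / (theta^2 * delta)\<rceil>"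
    \<comment> \<open>the sampled column indices (each sampled with positive probability)\<close>
    and j_range: "\<forall>t<p. j t < n \<and> col_prob A (j t) > 0"
    and S_def: "S = samp_cols A p j"
    \<comment> \<open>the sampled row indices (each sampled with positive probability)\<close>
    and i_range: "\<forall>t<p. i t < m \<and> row_prob S (i t) > 0"
    and W_def: "W = samp_rows S p i"
    \<comment> \<open>ordered orthonormal eigenbasis of W^T W: s are the singular values of W in
        nonincreasing order, columns of Vf the corresponding right singular vectors\<close>
    and Vf_dim: "Vf \<in> carrier_mat p p"
    and Vf_orth: "transpose_mat Vf * Vf = 1\<^sub>m p"
    and s_nonneg: "\<forall>l<p. s l \<ge> 0"
    and s_dec: "\<forall>a b. a \<le> b \<longrightarrow> b < p \<longrightarrow> s b \<le> s a"
    and W_eig: "transpose_mat W * W = Vf * mat_diag p (\<lambda>l. (s l)^2) * transpose_mat Vf"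
    and V_def: "V = mat p k (\<lambda>(a,b). Vf $$ (a,b))"
    and Uhat_def: "Uhat = S * V * mat_diag k (\<lambda>l. 1 / s l)"
    and Ak_def: "Ak = mat m n (\<lambda>(a,b). \<Sum>l<k. sA l * UA $$ (a,l) * VA $$ (b,l))"
    \<comment> \<open>events (E1) and (E2)\<close>
    and E1: "fro_norm (A * transpose_mat A - S * transpose_mat S) \<le> theta * (fro_norm A)^2"
    and E2: "fro_norm (transpose_mat S * S - transpose_mat W * W) \<le> theta * (fro_norm S)^2"
  shows "(fro_norm (A - Uhat * transpose_mat Uhat * A))^2
           < (fro_norm (A - Ak))^2 + 5 * \<omega> * (fro_norm A)^2"
proof -
  have r1: "1 \<le> r" using k_bds by simp
  have sr: "sA (r-1) > 0" using sA_pos r1 by auto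
  define F where "F = (fro_norm A)^2"
  have F_eq: "F = (\<Sum>l<r. (sA l)^2)"
    unfolding F_def by (rule svd_F[OF A_dim UA_dim VA_dim UA_orth VA_orth A_svd])
  have sA_sq_dec: "(sA c)^2 \<le> (sA a)^2" if "a \<le> c" "c < r" for a c
    using sA_dec sA_pos that by (intro power_mono) auto
  have memF: "(sA l)^2 \<le> F" if "l < r" for l
    unfolding F_eq using that by (intro member_le_sum) auto
  have Fpos: "F > 0"
  proof -
    have "0 < sA 0" using sA_pos r1 by auto
    hence "0 < (sA 0)^2" by simp
    moreover have "(sA 0)^2 \<le> F" using memF r1 by auto
    ultimately show ?thesis by linarith
  qed
  have ES: "{e. e \<noteq> 0 \<and> eigenvalue (transpose_mat A * A) e} = (\<lambda>l. (sA l)^2) ` {..<r}"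
    by (rule eig_set[OF A_dim UA_dim VA_dim UA_orth VA_orth A_svd sA_pos])
  have Min_eq: "Min {e. e \<noteq> 0 \<and> eigenvalue (transpose_mat A * A) e} = (sA (r-1))^2"
    unfolding ES
  proof (rule Min_eqI)
    show "finite ((\<lambda>l. (sA l)^2) ` {..<r})" by simp
    show "(sA (r-1))^2 \<in> (\<lambda>l. (sA l)^2) ` {..<r}" using r1 by auto
    fix y assume "y \<in> (\<lambda>l. (sA l)^2) ` {..<r}"
    then obtain l where "l < r" "y = (sA l)^2" by auto
    thus "(sA (r-1))^2 \<le> y" using sA_sq_dec[of l "r-1"] r1 by simp
  qed
  have sig: "sigma_min A = sA (r-1)"
    unfolding sigma_min_def Min_eq using sr by simp
  define b where "b = (sigma_min A)^2"
  have b_eq: "b = (sA (r-1))^2" unfolding b_def sig ..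
  have sigpos: "sigma_min A > 0" unfolding sig using sr .
  have bpos: "b > 0" using sigpos unfolding b_def by simp
  have b_le: "\<forall>l<r. b \<le> (sA l)^2" unfolding b_eq using sA_sq_dec r1 by auto
  have bF: "b \<le> F" unfolding b_eq using memF r1 by simp
  define sp where "sp = spec_norm A"
  define X where "X = fro_norm A * cond_num A + sp"
  have om_eq: "\<omega> = sp^2 * eps^2 / (196 * X^2)" unfolding omega_def sp_def X_def ..
  have om_nn: "\<omega> \<ge> 0" unfolding om_eq by simp
  define den where "den = (4 * real k + 3 + 2 * \<omega>) * (cond_num A)^2 * (fro_norm A)^2"
  have den_nn: "den \<ge> 0" unfolding den_def using om_nn by simp
  have th2: "theta \<le> \<omega> * sp^2 / den" using theta(2) unfolding den_def sp_def .
  have q: "\<omega> * sp^2 / den > 0" using th2 theta(1) by linarith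
  have denpos: "den > 0" using q den_nn by (cases "den = 0") auto
  have omsp: "\<omega> * sp^2 > 0" using q denpos by (simp add: zero_less_divide_iff)
  have sp0: "sp \<noteq> 0" using omsp by auto
  have ompos: "\<omega> > 0" using omsp om_nn by (cases "\<omega> = 0") auto
  have kap: "(cond_num A)^2 = sp^2 / b" unfolding cond_num_def sp_def b_def by (simp add: power_divide)
  have tauom: "theta * F * (4 * real k + 3 + 2 * \<omega>) \<le> \<omega> * b"
  proof -
    have "theta * den \<le> \<omega> * sp^2" using th2 denpos by (simp add: field_simps)
    hence "theta * ((4 * real k + 3 + 2 * \<omega>) * (sp^2 / b) * F) \<le> \<omega> * sp^2"
      unfolding den_def kap F_def .
    hence "(theta * F * (4 * real k + 3 + 2 * \<omega>)) * sp^2 \<le> (\<omega> * b) * sp^2"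
      using bpos by (simp add: field_simps)
    thus ?thesis using sp0 by simp
  qed
  have om_small: "\<omega> \<le> 1 / 196"
  proof -
    have kpos: "cond_num A * sp \<ge> 0" unfolding cond_num_def sp_def using sigpos
      by (simp add: power2_eq_square[symmetric] divide_nonneg_pos)
    have "sp^2 \<le> X^2"
    proof -
      have "0 \<le> fro_norm A * (cond_num A * sp)" using fro_ge0[of A] kpos by simp
      hence "X^2 = (fro_norm A * cond_num A)^2 + 2 * (fro_norm A * (cond_num A * sp)) + sp^2"
        unfolding X_def by (simp add: power2_eq_square algebra_simps)
      thus ?thesis using \<open>0 \<le> fro_norm A * (cond_num A * sp)\<close> by simp
    qed
    have Xpos: "X^2 > 0" using \<open>sp^2 \<le> X^2\<close> sp0 by (smt (verit) zero_less_power2)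
    have "eps^2 \<le> 1" using eps by (simp add: power_le_one)
    have "\<omega> = (sp^2 / X^2) * (eps^2 / 196)" unfolding om_eq by (simp add: field_simps)
    also have "\<dots> \<le> 1 * (1 / 196)"
      using \<open>sp^2 \<le> X^2\<close> Xpos \<open>eps^2 \<le> 1\<close> by (intro mult_mono) (auto simp: divide_le_eq_1)
    finally show ?thesis by simp
  qed
  have small: "1372 * (theta * F) \<le> b"
  proof -
    have "theta * F * 7 \<le> theta * F * (4 * real k + 3 + 2 * \<omega>)"
      using theta(1) Fpos k_bds om_nn by (intro mult_left_mono) auto
    also have "\<dots> \<le> \<omega> * b" by (rule tauom)
    also have "\<dots> \<le> (1/196) * b" using om_small bpos by (intro mult_right_mono) auto
    finally show ?thesis by simp
  qed
  have kp: "k \<le> p"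
  proof -
    have "theta * F * (4 * real k + 3) \<le> theta * F * (4 * real k + 3 + 2 * \<omega>)"
      using theta(1) Fpos om_nn by (intro mult_left_mono) auto
    also have "\<dots> \<le> \<omega> * b" by (rule tauom)
    also have "\<dots> \<le> 1 * F" using om_small bF bpos by (intro mult_mono) auto
    finally have "(theta * (4 * real k + 3)) * F \<le> 1 * F" by (simp add: algebra_simps)
    hence t1: "theta * (4 * real k + 3) \<le> 1" using Fpos by (simp add: mult_le_cancel_right)
    hence kt: "real k * theta \<le> 1" and tt: "theta \<le> 1" using theta(1) by (simp_all add: algebra_simps) (smt (verit) mult_nonneg_nonneg of_nat_0_le_iff)+
    have "real k * theta^2 \<le> 1"
    proof -
      have "real k * theta^2 = (real k * theta) * theta" by (simp add: power2_eq_square)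
      also have "\<dots> \<le> 1 * 1" using kt tt theta(1) by (intro mult_mono) auto
      finally show ?thesis by simp
    qed
    hence "real k * (theta^2 * delta) \<le> 1"
    proof -
      have "theta^2 * delta \<le> theta^2 * 1" using delta by (intro mult_left_mono) auto
      hence "real k * (theta^2 * delta) \<le> real k * (theta^2 * 1)" using delta by (intro mult_left_mono) auto
      hence "real k * (theta^2 * delta) \<le> real k * theta^2 * 1" by simp
      thus ?thesis using \<open>real k * theta^2 \<le> 1\<close> by simp
    qed
    hence "real k \<le> 1 / (theta^2 * delta)" using theta(1) delta by (simp add: field_simps)
    hence "real k \<le> real_of_int \<lceil>1 / (theta^2 * delta)\<rceil>" by (meson le_of_int_ceiling order_trans)
    hence "int k \<le> \<lceil>1 / (theta^2 * delta)\<rceil>" by linarith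
    thus ?thesis unfolding p_def by linarith
  qed
  have ppos: "p > 0" using kp k_bds by simp
  have Sc: "S \<in> carrier_mat m p" unfolding S_def samp_cols_def using A_dim by simp
  have Sent: "S $$ (a,t) = A $$ (a, j t) / sqrt (real p * col_prob A (j t))" if "a < m" "t < p" for a t
    unfolding S_def samp_cols_def using that A_dim by simp
  have colsum: "(\<Sum>a<m. (S $$ (a,t))^2) = F / real p" if t: "t < p" for t
  proof -
    define cs where "cs = (\<Sum>a<m. (A $$ (a, j t))^2)"
    have P: "col_prob A (j t) = cs / F" unfolding col_prob_def cs_def F_def using A_dim by simp
    have Ppos: "col_prob A (j t) > 0" using j_range t by simp
    have cspos: "cs > 0" using Ppos Fpos unfolding P by (simp add: zero_less_divide_iff)
    have "(\<Sum>a<m. (S $$ (a,t))^2) = (\<Sum>a<m. (A $$ (a, j t))^2 / (real p * col_prob A (j t)))"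
      using Sent t Ppos by (intro sum.cong) (auto simp: power_divide)
    also have "\<dots> = cs / (real p * col_prob A (j t))" unfolding cs_def by (simp add: sum_divide_distrib)
    also have "\<dots> = F / real p" unfolding P using cspos Fpos ppos by (simp add: field_simps)
    finally show ?thesis .
  qed
  have FS: "(fro_norm S)^2 = F"
  proof -
    have "(fro_norm S)^2 = (\<Sum>a<m. \<Sum>t<p. (S $$ (a,t))^2)" unfolding fro_sq using Sc by simp
    also have "\<dots> = (\<Sum>t<p. \<Sum>a<m. (S $$ (a,t))^2)" by (rule sum.swap)
    also have "\<dots> = (\<Sum>t<p. F / real p)" using colsum by simp
    also have "\<dots> = F" using ppos by simp
    finally show ?thesis .
  qed
  have E1': "fro_norm (A * transpose_mat A - S * transpose_mat S) \<le> theta * F"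
    using E1 unfolding F_def .
  have E2': "fro_norm (transpose_mat S * S - transpose_mat W * W) \<le> theta * F"
    using E2 unfolding FS .
  have tau: "0 < theta * F" using theta(1) Fpos by simp
  interpret c: core A UA VA Vf S "transpose_mat W * W" m n r k p sA s "theta * F" b
    using A_dim UA_dim VA_dim UA_orth VA_orth sA_pos A_svd k_bds kp Sc Vf_dim Vf_orth s_nonneg s_dec W_eig
      E1' E2' bpos b_le tau small
    unfolding core_def by auto
  have U: "Uhat = c.Uh" unfolding Uhat_def c.Uh_def V_def c.Vk_def ..
  have "(fro_norm (A - c.Uh * transpose_mat c.Uh * A))^2 < (fro_norm (A - Ak))^2 + 5 * \<omega> * (fro_norm A)^2"
    by (rule c.core_main[OF Ak_def ompos]) (use tauom in \<open>simp add: algebra_simps\<close>)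
  thus ?thesis unfolding U .
qed


end
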